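(* Let $p\in[2,\infty)$ and $q\in(1,2]$ with $\frac1p+\frac1q=1$. Let $\{(\mathbf{x}^{(i)},y^{(i)})\}_{i=1}^n$ with $\mathbf{x}^{(i)}\in\mathbb{R}^d$, $\|\mathbf{x}^{(i)}\|_p\le1$, $y^{(i)}\in\{-1,1\}$, $n\ge2$, and suppose there is $\mathbf{w}^*$ with $\|\mathbf{w}^*\|_q\le1$ and $\min_iy^{(i)}\mathbf{x}^{(i)\top}\mathbf{w}^*\ge\gamma>0$. Let $A$ have rows $y^{(i)}\mathbf{x}^{(i)\top}$, $g(\mathbf{w},\mathbf{p})=\mathbf{p}^{\top}A\mathbf{w}$, $\alpha_t=1$, $\eta^{\mathbf{w}}=\sqrt{\frac{1}{2(q-1)\log n}}$, $\eta^{\mathbf{p}}=1/\eta^{\mathbf{w}}$, $\mathbf{p}_0=\tfrac{\mathbf{1}}{n}$, and $h_j(\mathbf{w})=-g(\mathbf{w},\mathbf{p}_j)$, $\ell_j(\mathbf{p})=g(\mathbf{w}_j,\mathbf{p})$. For $t=1,\dots,T$ let $\mathbf{w}_t=\arg\min_{\mathbf{w}\in\mathbb{R}^d}\eta^{\mathbf{w}}\big[\sum_{j=1}^{t-1}h_j(\mathbf{w})+h_{t-1}(\mathbf{w})\big]+\frac{1}{2(q-1)}\|\mathbf{w}\|_q^2$, and then $\mathbf{p}_t=\arg\min_{\mathbf{p}\in\Delta^n}\eta^{\mathbf{p}}\sum_{s=1}^t\ell_s(\mathbf{p})+D_E(\mathbf{p},\tfrac{\mathbf{1}}{n})$. Let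 $\overline{\mathbf{w}}_T=\frac1T\sum_{s=1}^T\mathbf{w}_s$. Then there is a universal constant $C>0$ such that whenever $T\ge C\sqrt{2(p-1)\log n}/\gamma$, $\overline{\mathbf{w}}_T$ has non-negative margin, i.e. $\min_iy^{(i)}\mathbf{x}^{(i)\top}\overline{\mathbf{w}}_T\ge0$.
   Context: $\Delta^n$ is the probability simplex; $\mathbf{1}$ the all-ones vector; $D_E(\mathbf{p},\mathbf{q})=\sum_ip_i\log(p_i/q_i)$ (KL divergence). (The Bregman divergence of $\frac{1}{2(q-1)}\|\cdot\|_q^2$ from $\mathbf{0}$ equals $\frac{1}{2(q-1)}\|\mathbf{w}\|_q^2$.) *)

theory Defs
  imports Complex_Main
begin

text \<open>Vectors in R^m are represented as functions nat => real supported on {..<m}.\<close>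

definition vecs :: "nat \<Rightarrow> (nat \<Rightarrow> real) set" where
  "vecs m = {v. \<forall>i\<ge>m. v i = 0}"

definition lpnorm :: "real \<Rightarrow> nat \<Rightarrow> (nat \<Rightarrow> real) \<Rightarrow> real" where
  "lpnorm r m v = (\<Sum>i<m. \<bar>v i\<bar> powr r) powr (1 / r)"

definition simplex :: "nat \<Rightarrow> (nat \<Rightarrow> real) set" where
  "simplex n = {v. (\<forall>i<n. 0 \<le> v i) \<and> (\<Sum>i<n. v i) = 1 \<and> (\<forall>i\<ge>n. v i = 0)}"

text \<open>KL divergence; the convention 0 log 0 = 0 holds since 0 * ln _ = 0.\<close>
definition KL :: "nat \<Rightarrow> (nat \<Rightarrow> real) \<Rightarrow> (nat \<Rightarrow> real) \<Rightarrow> real" where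
  "KL n a b = (\<Sum>i<n. a i * ln (a i / b i))"

definition Aw :: "nat \<Rightarrow> (nat \<Rightarrow> nat \<Rightarrow> real) \<Rightarrow> (nat \<Rightarrow> real) \<Rightarrow> (nat \<Rightarrow> real) \<Rightarrow> nat \<Rightarrow> real" where
  "Aw d x y w i = y i * (\<Sum>k<d. x i k * w k)"

definition gval :: "nat \<Rightarrow> nat \<Rightarrow> (nat \<Rightarrow> nat \<Rightarrow> real) \<Rightarrow> (nat \<Rightarrow> real) \<Rightarrow> (nat \<Rightarrow> real) \<Rightarrow> (nat \<Rightarrow> real) \<Rightarrow> real" where
  "gval d n x y w pv = (\<Sum>i<n. pv i * Aw d x y w i)"

end

theory Submission
  imports Defs "HOL-Analysis.Convex"
begin

lemma powr_eq0_iff_nonneg: "(a::real) \<ge> 0 \<Longrightarrow> p > 0 \<Longrightarrow> (a powr p = 0) = (a = 0)"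
  by simp

lemma holder_sum:
  fixes a b :: "'i \<Rightarrow> real"
  assumes fin: "finite I" and p: "p > 1" and q: "q > 1" and pq: "1/p + 1/q = 1"
    and a: "\<And>i. a i \<ge> 0" and b: "\<And>i. b i \<ge> 0"
  shows "(\<Sum>i\<in>I. a i * b i) \<le> (\<Sum>i\<in>I. a i powr p) powr (1/p) * (\<Sum>i\<in>I. b i powr q) powr (1/q)"
proof -
  define A where "A = (\<Sum>i\<in>I. a i powr p)"
  define B where "B = (\<Sum>i\<in>I. b i powr q)"
  have A0: "A \<ge> 0" "B \<ge> 0" unfolding A_def B_def by (auto intro: sum_nonneg)
  show ?thesis
  proof (cases "A = 0 \<or> B = 0")
    case True
    then have "\<forall>i\<in>I. a i * b i = 0"
    proof
      assume "A = 0"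
      then have "\<forall>i\<in>I. a i powr p = 0" using sum_nonneg_eq_0_iff[OF fin, of "\<lambda>i. a i powr p"] a unfolding A_def by auto
      then show ?thesis using a p by auto
    next
      assume "B = 0"
      then have "\<forall>i\<in>I. b i powr q = 0" using sum_nonneg_eq_0_iff[OF fin, of "\<lambda>i. b i powr q"] b unfolding B_def by auto
      then show ?thesis using b q by auto
    qed
    then have "(\<Sum>i\<in>I. a i * b i) = 0" by (intro sum.neutral) blast
    then show ?thesis using A0 A_def B_def by simp
  next
    case False
    then have Ap: "A > 0" and Bp: "B > 0" using A0 by auto
    define a' where "a' i = a i / A powr (1/p)" for i
    define b' where "b' i = b i / B powr (1/q)" for i
    have y: "a' i * b' i \<le> a i powr p / (p * A) + b i powr q / (q * B)" for i
    proof -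
      have "a' i * b' i \<le> a' i powr p / p + b' i powr q / q"
        by (rule Youngs_inequality[OF p q pq]) (use a b Ap Bp in \<open>auto simp: a'_def b'_def\<close>)
      also have "a' i powr p = a i powr p / A"
        using a Ap p by (simp add: a'_def powr_divide powr_powr)
      also have "b' i powr q = b i powr q / B"
        using b Bp q by (simp add: b'_def powr_divide powr_powr)
      finally show ?thesis by (simp add: mult.commute)
    qed
    have "(\<Sum>i\<in>I. a' i * b' i) \<le> (\<Sum>i\<in>I. a i powr p / (p * A) + b i powr q / (q * B))"
      by (rule sum_mono) (rule y)
    also have "\<dots> = A / (p*A) + B / (q*B)"
      by (simp add: sum.distrib A_def B_def sum_divide_distrib)
    also have "\<dots> = 1" using Ap Bp pq by simp
    finally have s: "(\<Sum>i\<in>I. a' i * b' i) \<le> 1" .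
    have "(\<Sum>i\<in>I. a i * b i) = A powr (1/p) * B powr (1/q) * (\<Sum>i\<in>I. a' i * b' i)"
      using Ap Bp by (simp add: a'_def b'_def sum_distrib_left)
    also have "\<dots> \<le> A powr (1/p) * B powr (1/q) * 1"
      by (rule mult_left_mono[OF s]) simp
    finally show ?thesis by (simp add: A_def B_def)
  qed
qed

lemma abs_powr_tendsto0:
  assumes "a > (0::real)"
  shows "((\<lambda>h::real. \<bar>h\<bar> powr a) \<longlongrightarrow> 0) (at 0)"
  by (rule tendsto_zero_powrI) (auto intro!: tendsto_eq_intros assms)

lemma DERIV_abs_powr:
  fixes p :: real
  assumes p: "p > 1"
  shows "DERIV (\<lambda>u. \<bar>u\<bar> powr p) u :> p * (sgn u * \<bar>u\<bar> powr (p-1))"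
proof (cases "u > 0")
  case True
  have "DERIV (\<lambda>u. u powr p) u :> p * u powr (p-1)"
    using True by (rule has_real_derivative_powr)
  then have "DERIV (\<lambda>u. u powr p) u :> p * (sgn u * \<bar>u\<bar> powr (p-1))" using True by simp
  then show ?thesis
    by (rule has_field_derivative_transform_within_open[where S="{0<..}"]) (use True in auto)
next
  case False
  show ?thesis
  proof (cases "u < 0")
    case True
    have "DERIV (\<lambda>u. (-u) powr p) u :> p * (-u) powr (p-1) * (-1)"
      using True by (auto intro!: derivative_eq_intros)
    then have "DERIV (\<lambda>u. (-u) powr p) u :> p * (sgn u * \<bar>u\<bar> powr (p-1))"
      using True by simp
    then show ?thesis
      by (rule has_field_derivative_transform_within_open[where S="{..<0}"]) (use True in auto)
  next
    case False
    with \<open>\<not> u > 0\<close> have u: "u = 0" by simp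
    have lim0: "((\<lambda>h. \<bar>h\<bar> powr (p-1)) \<longlongrightarrow> 0) (at 0)" using p by (intro abs_powr_tendsto0) simp
    have ev: "\<forall>\<^sub>F h in at 0. norm ((\<bar>0 + h\<bar> powr p - \<bar>0\<bar> powr p) / h) \<le> norm (\<bar>h\<bar> powr (p-1)) * 1"
    proof (rule always_eventually, rule allI)
      fix h :: real
      show "norm ((\<bar>0 + h\<bar> powr p - \<bar>0\<bar> powr p) / h) \<le> norm (\<bar>h\<bar> powr (p-1)) * 1"
      proof (cases "h = 0")
        case False
        then have "\<bar>h\<bar> powr p = \<bar>h\<bar> powr (p-1) * \<bar>h\<bar>"
          by (simp add: powr_diff)
        then show ?thesis using False by (simp add: abs_divide)
      qed simp
    qed
    have "((\<lambda>h. (\<bar>0 + h\<bar> powr p - \<bar>0\<bar> powr p) / h) \<longlongrightarrow> 0) (at 0)"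
      by (rule tendsto_0_le[OF lim0 ev])
    then show ?thesis using u by (simp add: DERIV_def)
  qed
qed

definition ee :: "real \<Rightarrow> real \<Rightarrow> real" where
  "ee p u = (if p = 2 then 1 else \<bar>u\<bar> powr (p-2))"

lemma DERIV_sgn_powr:
  fixes p :: real
  assumes p: "p \<ge> 2"
  shows "DERIV (\<lambda>u. sgn u * \<bar>u\<bar> powr (p-1)) u :> (p-1) * ee p u"
proof (cases "u > 0")
  case True
  have "DERIV (\<lambda>u. u powr (p-1)) u :> (p-1) * u powr (p-1-1)"
    using True by (rule has_real_derivative_powr)
  then have "DERIV (\<lambda>u. u powr (p-1)) u :> (p-1) * ee p u"
    using True by (auto simp: ee_def)
  then show ?thesis
    by (rule has_field_derivative_transform_within_open[where S="{0<..}"]) (use True in auto)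
next
  case False
  show ?thesis
  proof (cases "u < 0")
    case True
    have "DERIV (\<lambda>u. - ((-u) powr (p-1))) u :> - ((p-1) * (-u) powr (p-1-1) * (-1))"
      using True by (auto intro!: derivative_eq_intros)
    then have "DERIV (\<lambda>u. - ((-u) powr (p-1))) u :> (p-1) * ee p u"
      using True by (auto simp: ee_def)
    then show ?thesis
      by (rule has_field_derivative_transform_within_open[where S="{..<0}"]) (use True in auto)
  next
    case False
    with \<open>\<not> u > 0\<close> have u: "u = 0" by simp
    have eq: "sgn h * \<bar>h\<bar> powr (p-1) / h = \<bar>h\<bar> powr (p-2)"
      if "h \<noteq> 0" for h :: real
    proof -
      have "\<bar>h\<bar> powr (p-1) = \<bar>h\<bar> powr ((p-2) + 1)" by simp
      also have "\<dots> = \<bar>h\<bar> powr (p-2) * \<bar>h\<bar>"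
        using that by (simp only: powr_add) simp
      then show ?thesis using that by (cases "h > 0") (auto simp: field_simps)
    qed
    have lim: "((\<lambda>h. \<bar>h\<bar> powr (p-2)) \<longlongrightarrow> (p-1) * ee p 0) (at 0)"
    proof (cases "p = 2")
      case True
      have "\<forall>\<^sub>F h in at (0::real). 1 = \<bar>h\<bar> powr (p-2)"
        using True by (auto simp: eventually_at_filter)
      then show ?thesis using True by (auto simp: ee_def intro: tendsto_eventually tendsto_cong[THEN iffD1, OF _ tendsto_const])
    next
      case False
      then have "p - 2 > 0" using p by simp
      from abs_powr_tendsto0[OF this] show ?thesis using False by (simp add: ee_def)
    qed
    have "((\<lambda>h. sgn h * \<bar>h\<bar> powr (p-1) / h) \<longlongrightarrow> (p-1) * ee p 0) (at 0)"
      by (rule tendsto_cong[THEN iffD2, OF _ lim]) (use eq in \<open>auto simp: eventually_at_filter\<close>)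
    then show ?thesis using u by (simp add: DERIV_def)
  qed
qed

definition ip :: "nat \<Rightarrow> (nat \<Rightarrow> real) \<Rightarrow> (nat \<Rightarrow> real) \<Rightarrow> real" where
  "ip d a b = (\<Sum>k<d. a k * b k)"

lemma lpnorm_nonneg: "lpnorm r m v \<ge> 0"
  by (simp add: lpnorm_def)

lemma lpnorm_powr: "r > 0 \<Longrightarrow> (lpnorm r m v) powr r = (\<Sum>i<m. \<bar>v i\<bar> powr r)"
  by (simp add: lpnorm_def powr_powr sum_nonneg)

lemma lpnorm_sq: "(lpnorm r m v)\<^sup>2 = (\<Sum>i<m. \<bar>v i\<bar> powr r) powr (2/r)"
proof -
  have "(lpnorm r m v)\<^sup>2 = (\<Sum>i<m. \<bar>v i\<bar> powr r) powr (1/r) * (\<Sum>i<m. \<bar>v i\<bar> powr r) powr (1/r)"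
    by (simp add: lpnorm_def power2_eq_square)
  also have "\<dots> = (\<Sum>i<m. \<bar>v i\<bar> powr r) powr (2/r)"
    by (simp add: powr_add[symmetric])
  finally show ?thesis .
qed

lemma lpnorm_cong: "(\<And>k. k < m \<Longrightarrow> v k = w k) \<Longrightarrow> lpnorm r m v = lpnorm r m w"
  unfolding lpnorm_def by (metis (mono_tags, lifting) lessThan_iff sum.cong)

lemma lpnorm_scale:
  assumes r: "r > 0"
  shows "lpnorm r m (\<lambda>k. c * v k) = \<bar>c\<bar> * lpnorm r m v"
proof -
  have "(\<Sum>i<m. \<bar>c * v i\<bar> powr r) = \<bar>c\<bar> powr r * (\<Sum>i<m. \<bar>v i\<bar> powr r)"
    by (simp add: abs_mult powr_mult sum_distrib_left)
  then have "lpnorm r m (\<lambda>k. c * v k) = (\<bar>c\<bar> powr r) powr (1/r) * (\<Sum>i<m. \<bar>v i\<bar> powr r) powr (1/r)"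
    by (simp add: lpnorm_def powr_mult sum_nonneg)
  also have "(\<bar>c\<bar> powr r) powr (1/r) = \<bar>c\<bar>" using r by (simp add: powr_powr)
  finally show ?thesis by (simp add: lpnorm_def)
qed

lemma holder_ip:
  assumes p: "p > 1" and q: "q > 1" and pq: "1/p + 1/q = 1"
  shows "\<bar>ip d a b\<bar> \<le> lpnorm p d a * lpnorm q d b"
proof -
  have "\<bar>ip d a b\<bar> \<le> (\<Sum>k<d. \<bar>a k\<bar> * \<bar>b k\<bar>)"
    unfolding ip_def by (rule order_trans[OF sum_abs]) (simp add: abs_mult)
  also have "\<dots> \<le> (\<Sum>k<d. \<bar>a k\<bar> powr p) powr (1/p) * (\<Sum>k<d. \<bar>b k\<bar> powr q) powr (1/q)"
    by (rule holder_sum[OF _ p q pq]) auto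
  finally show ?thesis by (simp add: lpnorm_def)
qed

lemma pq_rel:
  assumes p: "p > 1" and pq: "1/p + 1/q = (1::real)"
  shows "(p-1) * (q-1) = 1" "q = p / (p-1)" "q > 1" "(p - 1) * q = p"
proof -
  have "q \<noteq> 0" using pq p by (auto simp: field_simps)
  have "1/q = 1 - 1/p" using pq by simp
  also have "\<dots> = (p-1)/p" using p by (simp add: field_simps)
  finally have "q = p/(p-1)" using p \<open>q \<noteq> 0\<close> by (simp add: field_simps)
  then show "q = p/(p-1)" "(p-1)*(q-1) = 1" "(p - 1) * q = p" using p by (auto simp: field_simps)
  have "p - 1 > 0" using p by simp
  then have "p/(p-1) > 1" by (simp add: less_divide_eq)
  then show "q > 1" using \<open>q = p/(p-1)\<close> by simp
qed

lemma dual_vec: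
  assumes p: "p > 1" and pq: "1/p + 1/q = 1"
  shows "\<exists>v\<in>vecs d. lpnorm q d v \<le> 1 \<and> ip d th v = lpnorm p d th"
proof (cases "lpnorm p d th = 0")
  case True
  show ?thesis
  proof (rule bexI[of _ "\<lambda>k. 0"])
    show "lpnorm q d (\<lambda>k. 0) \<le> 1 \<and> ip d th (\<lambda>k. 0) = lpnorm p d th"
      using True by (simp add: ip_def lpnorm_def)
  qed (simp add: vecs_def)
next
  case False
  define N where "N = lpnorm p d th"
  have Np: "N > 0" using False lpnorm_nonneg[of p d th] by (simp add: N_def)
  have q: "q > 1" and pq1: "(p-1)*q = p" using pq_rel[OF p pq] by auto
  have NS: "N powr p = (\<Sum>k<d. \<bar>th k\<bar> powr p)" unfolding N_def using p by (simp add: lpnorm_powr)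
  define v where "v k = (if k < d then sgn (th k) * \<bar>th k\<bar> powr (p-1) / N powr (p-1) else 0)" for k
  have "v \<in> vecs d" by (simp add: vecs_def v_def)
  have ipv: "ip d th v = (\<Sum>k<d. \<bar>th k\<bar> powr p) / N powr (p-1)"
  proof -
    have "th k * (sgn (th k) * \<bar>th k\<bar> powr (p-1)) = \<bar>th k\<bar> powr p" for k
    proof -
      have "th k * sgn (th k) = \<bar>th k\<bar>" by (simp add: abs_sgn mult.commute)
      moreover have "\<bar>th k\<bar> * \<bar>th k\<bar> powr (p-1) = \<bar>th k\<bar> powr p"
        using p by (cases "th k = 0") (auto simp: powr_diff)
      ultimately show ?thesis by (metis mult.assoc)
    qed
    then show ?thesis by (simp add: ip_def v_def sum_divide_distrib)
  qed
  also have "\<dots> = N powr p / N powr (p-1)" using NS by simp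
  also have "\<dots> = N" using Np by (simp add: powr_diff)
  finally have ip1: "ip d th v = lpnorm p d th" by (simp add: N_def)
  have "(\<Sum>k<d. \<bar>v k\<bar> powr q) = (\<Sum>k<d. \<bar>th k\<bar> powr p / N powr p)"
  proof (rule sum.cong)
    fix k assume "k \<in> {..<d}"
    then have "\<bar>v k\<bar> = \<bar>th k\<bar> powr (p-1) / N powr (p-1)"
      by (cases "th k = 0") (auto simp: v_def abs_mult abs_sgn_eq)
    then have "\<bar>v k\<bar> powr q = (\<bar>th k\<bar> powr (p-1)) powr q / (N powr (p-1)) powr q"
      by (simp add: powr_divide)
    also have "\<dots> = \<bar>th k\<bar> powr p / N powr p" by (simp add: powr_powr pq1)
    finally show "\<bar>v k\<bar> powr q = \<bar>th k\<bar> powr p / N powr p" .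
  qed simp
  also have "\<dots> = 1" using NS Np by (simp add: sum_divide_distrib[symmetric] flip: NS)
  finally have "lpnorm q d v = 1" by (simp add: lpnorm_def)
  then show ?thesis using ip1 \<open>v \<in> vecs d\<close> by (intro bexI[where x=v]) simp_all
qed

lemma abs_powr2: "\<bar>x::real\<bar> powr 2 = x\<^sup>2"
  by (cases "x = 0") (simp_all add: powr_realpow[of "\<bar>x\<bar>" 2, simplified])

lemma hess_bound:
  assumes p: "p \<ge> 2" and Mpos: "(\<Sum>k<d. \<bar>u k\<bar> powr p) > 0"
  shows "(\<Sum>k<d. \<bar>u k\<bar> powr p) powr (2/p - 1) * (\<Sum>k<d. ee p (u k) * (w k)\<^sup>2)
         \<le> (lpnorm p d w)\<^sup>2"
proof (cases "p = 2")
  case True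
  then show ?thesis using Mpos by (simp add: ee_def lpnorm_sq abs_powr2)
next
  case False
  then have p2: "p > 2" using p by simp
  define M where "M = (\<Sum>k<d. \<bar>u k\<bar> powr p)"
  have P: "p/(p-2) > 1" using p2 by (simp add: less_divide_eq)
  have Q: "p/2 > 1" using p2 by simp
  have PQ: "1/(p/(p-2)) + 1/(p/2) = 1" using p2 by (simp add: field_simps)
  have "(\<Sum>k<d. ee p (u k) * (w k)\<^sup>2) = (\<Sum>k<d. \<bar>u k\<bar> powr (p-2) * \<bar>w k\<bar> powr 2)"
    using False by (simp add: ee_def abs_powr2)
  also have "\<dots> \<le> (\<Sum>k<d. (\<bar>u k\<bar> powr (p-2)) powr (p/(p-2))) powr (1/(p/(p-2)))
                  * (\<Sum>k<d. (\<bar>w k\<bar> powr 2) powr (p/2)) powr (1/(p/2))"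
    by (rule holder_sum[OF _ P Q PQ]) auto
  also have "(\<Sum>k<d. (\<bar>u k\<bar> powr (p-2)) powr (p/(p-2))) = M"
    using p2 by (simp add: powr_powr M_def)
  also have "(\<Sum>k<d. (\<bar>w k\<bar> powr 2) powr (p/2)) = (\<Sum>k<d. \<bar>w k\<bar> powr p)"
  proof (rule sum.cong)
    fix k show "(\<bar>w k\<bar> powr 2) powr (p/2) = \<bar>w k\<bar> powr p"
      by (simp only: powr_powr) simp
  qed simp
  finally have h: "(\<Sum>k<d. ee p (u k) * (w k)\<^sup>2) \<le> M powr ((p-2)/p) * (lpnorm p d w)\<^sup>2"
    by (simp add: lpnorm_sq)
  have Mp: "M > 0" using Mpos M_def by simp
  have "M powr (2/p - 1) * (\<Sum>k<d. ee p (u k) * (w k)\<^sup>2) \<le> M powr (2/p - 1) * (M powr ((p-2)/p) * (lpnorm p d w)\<^sup>2)"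
    by (rule mult_left_mono[OF h]) simp
  also have "\<dots> = M powr (2/p - 1 + (p-2)/p) * (lpnorm p d w)\<^sup>2"
    by (simp add: powr_add)
  also have "2/p - 1 + (p-2)/p = 0" using p2 by (simp add: field_simps)
  finally show ?thesis using Mp by (simp add: M_def)
qed

lemma subgrad_deriv:
  fixes phi :: "real \<Rightarrow> real"
  assumes sub: "\<And>s. phi s \<ge> phi 0 + s * c" and D: "DERIV phi 0 :> D"
  shows "D = c"
proof -
  have "DERIV (\<lambda>s. phi s - phi 0 - s * c) 0 :> D - 0 - c"
    using D by (auto intro!: derivative_eq_intros)
  then have "D - 0 - c = 0"
    by (rule DERIV_local_min[where d=1]) (use sub in \<open>auto simp: algebra_simps\<close>)
  then show ?thesis by simp
qed

lemma smooth:
  assumes p: "p \<ge> 2"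
    and sub: "\<And>z. (lpnorm p d z)\<^sup>2 \<ge> (lpnorm p d th)\<^sup>2 + ip d (\<lambda>k. z k - th k) g"
  shows "(lpnorm p d (\<lambda>k. th k + dl k))\<^sup>2 \<le> (lpnorm p d th)\<^sup>2 + ip d dl g + (p-1) * (lpnorm p d dl)\<^sup>2"
proof -
  have p1: "p > 1" and p0: "p > 0" using p by auto
  define phi where "phi s = (lpnorm p d (\<lambda>k. th k + s * dl k))\<^sup>2" for s
  define M where "M s = (\<Sum>k<d. \<bar>th k + s * dl k\<bar> powr p)" for s
  define c where "c = ip d dl g"
  define Nd where "Nd = (lpnorm p d dl)\<^sup>2"
  have Nd0: "Nd \<ge> 0" by (simp add: Nd_def)
  have phi0: "phi 0 = (lpnorm p d th)\<^sup>2" by (simp add: phi_def)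
  have phi1: "phi 1 = (lpnorm p d (\<lambda>k. th k + dl k))\<^sup>2" by (simp add: phi_def)
  have phiM: "phi s = M s powr (2/p)" for s by (simp add: phi_def M_def lpnorm_sq)
  have subs: "phi s \<ge> phi 0 + s * c" for s
  proof -
    have "ip d (\<lambda>k. (th k + s * dl k) - th k) g = s * c"
      by (simp add: ip_def c_def sum_distrib_left algebra_simps)
    then show ?thesis using sub[of "\<lambda>k. th k + s * dl k"] phi0 by (simp add: phi_def)
  qed
  have M0: "M s \<ge> 0" for s by (simp add: M_def sum_nonneg)
  show ?thesis
  proof (cases "\<exists>s0. M s0 = 0")
    case True
    then obtain s0 where s0: "M s0 = 0" by blast
    have z: "th k + s0 * dl k = 0" if "k < d" for k
    proof -
      have "\<forall>k\<in>{..<d}. \<bar>th k + s0 * dl k\<bar> powr p = 0"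
        using s0 unfolding M_def by (subst sum_nonneg_eq_0_iff[symmetric]) auto
      then show ?thesis using that by simp
    qed
    have phis: "phi s = (s - s0)\<^sup>2 * Nd" for s
    proof -
      have "lpnorm p d (\<lambda>k. th k + s * dl k) = lpnorm p d (\<lambda>k. (s - s0) * dl k)"
      proof (rule lpnorm_cong)
        fix k assume "k < d"
        then have "th k = - (s0 * dl k)" using z[of k] by linarith
        then show "th k + s * dl k = (s - s0) * dl k" by (simp add: algebra_simps)
      qed
      then show ?thesis using p0 by (simp add: phi_def lpnorm_scale Nd_def power_mult_distrib)
    qed
    have "DERIV (\<lambda>s. (s - s0)\<^sup>2 * Nd) 0 :> 2 * (0 - s0) * Nd"
      by (auto intro!: derivative_eq_intros)
    moreover have "phi = (\<lambda>s. (s - s0)\<^sup>2 * Nd)" using phis by (simp add: fun_eq_iff)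
    ultimately have "DERIV phi 0 :> 2 * (0 - s0) * Nd" by simp
    from subgrad_deriv[OF subs this] have cc: "c = - 2 * s0 * Nd" by simp
    have "phi 1 = phi 0 + c + Nd" unfolding phis cc by (simp add: power2_eq_square algebra_simps)
    also have "\<dots> \<le> phi 0 + c + (p-1) * Nd" using Nd0 p by (simp add: mult_right_mono[of 1 "p-1" Nd, simplified])
    finally show ?thesis using phi0 phi1 by (simp add: c_def Nd_def)
  next
    case False
    then have Mp: "M s > 0" for s using M0[of s] by (auto simp: order_le_less)
    define sp where "sp u = sgn u * \<bar>u\<bar> powr (p-1)" for u :: real
    define M1 where "M1 s = (\<Sum>k<d. p * sp (th k + s * dl k) * dl k)" for s
    define M2 where "M2 s = (\<Sum>k<d. p * ((p-1) * ee p (th k + s * dl k) * dl k) * dl k)" for s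
    have lin: "DERIV (\<lambda>s. th k + s * dl k) s :> dl k" for k s
      by (auto intro!: derivative_eq_intros)
    have dM: "DERIV M s :> M1 s" for s
      unfolding M_def M1_def sp_def
      by (rule DERIV_sum, rule DERIV_chain2[OF DERIV_abs_powr[OF p1] lin])
    have dM1: "DERIV M1 s :> M2 s" for s
      unfolding M1_def M2_def sp_def
      by (rule DERIV_sum, rule DERIV_cmult_right, rule DERIV_cmult,
          rule DERIV_chain2[OF DERIV_sgn_powr[OF p] lin])
    define phi1 where "phi1 s = 2/p * M s powr (2/p - 1) * M1 s" for s
    define phi2 where "phi2 s = 2/p * ((2/p - 1) * M s powr (2/p - 1 - 1) * M1 s * M1 s + M s powr (2/p - 1) * M2 s)" for s
    have dphi: "DERIV phi s :> phi1 s" for s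
    proof -
      have "DERIV (\<lambda>s. M s powr (2/p)) s :> 2/p * M s powr (2/p - of_nat 1) * M1 s"
        by (rule DERIV_fun_powr[OF dM Mp])
      moreover have "phi = (\<lambda>s. M s powr (2/p))" using phiM by (simp add: fun_eq_iff)
      ultimately show ?thesis by (simp add: phi1_def)
    qed
    have dphi1: "DERIV phi1 s :> phi2 s" for s
    proof -
      have "DERIV (\<lambda>s. M s powr (2/p - 1)) s :> (2/p - 1) * M s powr (2/p - 1 - of_nat 1) * M1 s"
        by (rule DERIV_fun_powr[OF dM Mp])
      then have "DERIV (\<lambda>s. 2/p * (M s powr (2/p - 1) * M1 s)) s :>
          2/p * ((2/p - 1) * M s powr (2/p - 1 - of_nat 1) * M1 s * M1 s + M2 s * M s powr (2/p - 1))"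
        by (intro DERIV_cmult DERIV_mult dM1)
      moreover have "phi1 = (\<lambda>s. 2/p * (M s powr (2/p - 1) * M1 s))" by (simp add: fun_eq_iff phi1_def)
      moreover have "2/p * ((2/p - 1) * M s powr (2/p - 1 - of_nat 1) * M1 s * M1 s + M2 s * M s powr (2/p - 1)) = phi2 s"
        by (simp add: phi2_def)
      ultimately show ?thesis by simp
    qed
    have phi2le: "phi2 s \<le> 2 * (p-1) * Nd" for s
    proof -
      have t1: "(2/p - 1) * M s powr (2/p - 1 - 1) * M1 s * M1 s \<le> 0"
      proof -
        have "2/p - 1 \<le> 0" using p by (simp add: divide_le_eq)
        moreover have "M s powr (2/p - 1 - 1) * M1 s * M1 s \<ge> 0" by (simp add: mult.assoc)
        ultimately show ?thesis by (metis mult.assoc mult_nonpos_nonneg)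
      qed
      have "M2 s = p * (p-1) * (\<Sum>k<d. ee p (th k + s * dl k) * (dl k)\<^sup>2)"
        by (simp add: M2_def sum_distrib_left power2_eq_square algebra_simps)
      then have "M s powr (2/p - 1) * M2 s = p * (p-1) * (M s powr (2/p - 1) * (\<Sum>k<d. ee p (th k + s * dl k) * (dl k)\<^sup>2))"
        by simp
      also have "\<dots> \<le> p * (p-1) * Nd"
      proof -
        have "M s powr (2/p - 1) * (\<Sum>k<d. ee p (th k + s * dl k) * (dl k)\<^sup>2) \<le> Nd"
          using hess_bound[OF p, where u="\<lambda>k. th k + s * dl k" and w=dl and d=d] Mp[of s] by (simp add: M_def Nd_def)
        then show ?thesis by (rule mult_left_mono) (use p in simp)
      qed
      finally have t2: "M s powr (2/p - 1) * M2 s \<le> p * (p-1) * Nd" .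
      have "phi2 s \<le> 2/p * (0 + p * (p-1) * Nd)"
        unfolding phi2_def by (rule mult_left_mono) (use t1 t2 p in auto)
      then show ?thesis using p by (simp add: algebra_simps)
    qed
    define K where "K = 2 * (p-1) * Nd"
    have c: "c = phi1 0" using subgrad_deriv[OF subs dphi[of 0]] by simp
    define psi1 where "psi1 s = phi1 s - c - K * s" for s
    have dpsi1: "DERIV psi1 s :> phi2 s - K" for s
      unfolding psi1_def by (auto intro!: derivative_eq_intros dphi1)
    have psi1le: "psi1 s \<le> 0" if "s \<ge> 0" for s
    proof -
      have "psi1 s \<le> psi1 0"
        by (rule DERIV_nonpos_imp_nonincreasing[OF that])
           (use dpsi1 phi2le in \<open>force simp: K_def\<close>)
      then show ?thesis using c by (simp add: psi1_def)
    qed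
    define psi where "psi s = phi s - c * s - K/2 * s\<^sup>2" for s
    have dpsi: "DERIV psi s :> psi1 s" for s
      unfolding psi_def psi1_def by (auto intro!: derivative_eq_intros dphi)
    have "psi 1 \<le> psi 0"
      by (rule DERIV_nonpos_imp_nonincreasing) (use dpsi psi1le in auto)
    then have "phi 1 \<le> phi 0 + c + (p-1) * Nd" by (simp add: psi_def K_def field_simps)
    then show ?thesis using phi0 phi1 by (simp add: c_def Nd_def)
  qed
qed

lemma log_sum:
  fixes a b :: "'i \<Rightarrow> real"
  assumes fin: "finite S" and a: "\<And>i. i \<in> S \<Longrightarrow> a i \<ge> 0" and b: "\<And>i. i \<in> S \<Longrightarrow> b i \<ge> 0"
    and supp: "\<And>i. i \<in> S \<Longrightarrow> a i > 0 \<Longrightarrow> b i > 0"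
  shows "(\<Sum>i\<in>S. a i * ln (a i / b i)) \<ge> (\<Sum>i\<in>S. a i) * ln ((\<Sum>i\<in>S. a i) / (\<Sum>i\<in>S. b i))"
proof (cases "(\<Sum>i\<in>S. a i) = 0")
  case True
  then have "\<forall>i\<in>S. a i = 0" using sum_nonneg_eq_0_iff[OF fin, of a] a by simp
  then show ?thesis by simp
next
  case False
  define A where "A = (\<Sum>i\<in>S. a i)"
  define B where "B = (\<Sum>i\<in>S. b i)"
  have "A \<ge> 0" unfolding A_def by (rule sum_nonneg) (use a in auto)
  then have A0: "A > 0" using False by (simp add: A_def)
  have "\<exists>j\<in>S. a j \<noteq> 0"
  proof (rule ccontr)
    assume "\<not> ?thesis"
    then have "A = 0" unfolding A_def by (intro sum.neutral) blast
    then show False using A0 by simp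
  qed
  then obtain j where j: "j \<in> S" "a j \<noteq> 0" by blast
  then have j: "j \<in> S" "a j > 0" using a[of j] by auto
  have B0: "B > 0" unfolding B_def
    by (rule sum_pos2[where f=b, OF fin j(1) supp[OF j]]) (use b in auto)
  have trm: "a i * ln (a i / b i) \<ge> a i * ln (A / B) + a i - b i * (A / B)" if i: "i \<in> S" for i
  proof (cases "a i = 0")
    case True then show ?thesis using b[OF i] A0 B0 by simp
  next
    case False
    then have ai: "a i > 0" using a[OF i] by simp
    then have bi: "b i > 0" using supp[OF i] by simp
    have "ln (b i * A / (a i * B)) \<le> b i * A / (a i * B) - 1"
      by (rule ln_le_minus_one) (use ai bi A0 B0 in simp)
    moreover have "ln (b i * A / (a i * B)) = ln (A / B) - ln (a i / b i)"
      using ai bi A0 B0 by (simp add: ln_div ln_mult)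
    ultimately have "ln (A / B) - ln (a i / b i) \<le> b i * A / (a i * B) - 1" by simp
    then have "a i * (ln (A / B) - ln (a i / b i)) \<le> a i * (b i * A / (a i * B) - 1)"
      using ai by (simp add: mult_left_mono)
    then show ?thesis using ai by (simp add: algebra_simps)
  qed
  have "(\<Sum>i\<in>S. a i * ln (a i / b i)) \<ge> (\<Sum>i\<in>S. a i * ln (A / B) + a i - b i * (A / B))"
    by (rule sum_mono) (rule trm)
  moreover have "(\<Sum>i\<in>S. a i * ln (A / B) + a i - b i * (A / B)) = A * ln (A / B)"
  proof -
    have "(\<Sum>i\<in>S. a i * ln (A / B) + a i - b i * (A / B)) = (\<Sum>i\<in>S. a i) * ln (A / B) + (\<Sum>i\<in>S. a i) - (\<Sum>i\<in>S. b i) * (A / B)"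
      by (simp only: sum.distrib sum_subtractf sum_distrib_right)
    also have "\<dots> = A * ln (A / B)" using B0 unfolding A_def[symmetric] B_def[symmetric] by simp
    finally show ?thesis .
  qed
  ultimately show ?thesis by (simp add: A_def B_def)
qed

lemma deriv_t1:
  fixes al x :: real
  assumes "x > 0 \<or> al = 0" and "al \<ge> 0"
  shows "DERIV (\<lambda>x. al * ln (al / x)) x :> - al / x"
proof (cases "al = 0")
  case True then show ?thesis by simp
next
  case False
  then have x: "x > 0" using assms by auto
  have al: "al > 0" using assms(2) False by linarith
  have "DERIV (\<lambda>x. al * (ln al - ln x)) x :> al * (0 - 1 / x)"
    using x by (auto intro!: derivative_eq_intros)
  then have "DERIV (\<lambda>x. al * (ln al - ln x)) x :> - al / x" by simp
  then show ?thesis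
    by (rule has_field_derivative_transform_within_open[where S="{0<..}"])
       (use x al in \<open>auto simp: ln_div\<close>)
qed

lemma deriv_t2:
  fixes al x :: real
  assumes "x < 1 \<or> al = 1" and "al \<le> 1"
  shows "DERIV (\<lambda>x. (1 - al) * ln ((1 - al) / (1 - x))) x :> (1 - al) / (1 - x)"
proof (cases "al = 1")
  case True then show ?thesis by simp
next
  case False
  then have x: "1 - x > 0" using assms by auto
  have al: "1 - al > 0" using assms(2) False by linarith
  have "DERIV (\<lambda>x. (1 - al) * (ln (1 - al) - ln (1 - x))) x :> (1 - al) * (0 - (1 / (1 - x)) * (0 - 1))"
    using x by (auto intro!: derivative_eq_intros)
  then have "DERIV (\<lambda>x. (1 - al) * (ln (1 - al) - ln (1 - x))) x :> (1 - al) / (1 - x)" by simp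
  then show ?thesis
    by (rule has_field_derivative_transform_within_open[where S="{..<1}"])
       (use x al in \<open>auto simp: ln_div\<close>)
qed

lemma quarter: "0 < x \<Longrightarrow> x < 1 \<Longrightarrow> 4 \<le> 1 / (x * (1 - (x::real)))"
proof -
  assume x: "0 < x" "x < 1"
  then have pos: "x * (1 - x) > 0" by simp
  have "4 * (x * (1 - x)) \<le> 1" using sum_squares_ge_zero[of "2*x - 1" 0]
    by (simp add: power2_eq_square algebra_simps)
  then show ?thesis using pos by (simp add: le_divide_eq)
qed

lemma bin_pinsker:
  fixes al be :: real
  assumes a0: "0 \<le> al" and a1: "al \<le> 1" and b0: "0 \<le> be" and b1: "be \<le> 1"
    and s0: "al > 0 \<Longrightarrow> be > 0" and s1: "al < 1 \<Longrightarrow> be < 1"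
  shows "al * ln (al / be) + (1 - al) * ln ((1 - al) / (1 - be)) \<ge> 2 * (al - be)\<^sup>2"
proof (cases "be = 0 \<or> be = 1")
  case True
  then show ?thesis
  proof
    assume "be = 0" then have "al = 0" using s0 a0 by force
    then show ?thesis using \<open>be = 0\<close> by simp
  next
    assume "be = 1" then have "al = 1" using s1 a1 by force
    then show ?thesis using \<open>be = 1\<close> by simp
  qed
next
  case False
  then have bb: "0 < be" "be < 1" using b0 b1 by auto
  define g where "g x = al * ln (al / x) + (1 - al) * ln ((1 - al) / (1 - x)) - 2 * (al - x)\<^sup>2" for x
  define g' where "g' x = - al / x + (1 - al) / (1 - x) + 4 * (al - x)" for x
  have dg: "DERIV g x :> g' x" if "x > 0 \<or> al = 0" "x < 1 \<or> al = 1" for x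
  proof -
    have "DERIV g x :> - al / x + (1 - al) / (1 - x) - 2 * (2 * (al - x) * (0 - 1))"
      unfolding g_def[abs_def]
      by (intro DERIV_diff DERIV_add deriv_t1 deriv_t2 that a0 a1) (auto intro!: derivative_eq_intros)
    moreover have "- al / x + (1 - al) / (1 - x) - 2 * (2 * (al - x) * (0 - 1)) = g' x"
      by (simp add: g'_def)
    ultimately show ?thesis by simp
  qed
  have key: "g' x = (x - al) * (1 / (x * (1 - x)) - 4)" if "0 < x" "x < 1" for x
    using that by (simp add: g'_def field_simps)
  have gal: "g al = 0" by (cases "al = 0"; cases "al = 1") (auto simp: g_def)
  have "g al \<le> g be"
  proof (cases "al \<le> be")
    case True
    show ?thesis
    proof (rule DERIV_nonneg_imp_nondecreasing[OF True])
      fix x assume x: "al \<le> x" "x \<le> be"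
      have c1: "x > 0 \<or> al = 0" using x a0 by auto
      have c2: "x < 1 \<or> al = 1" using x bb by auto
      have "g' x \<ge> 0"
      proof (cases "x = 0")
        case True then have "al = 0" using x a0 by simp
        then show ?thesis using True by (simp add: g'_def)
      next
        case False
        then have "0 < x" "x < 1" using c1 c2 x bb a0 by auto
        then show ?thesis unfolding key[OF \<open>0 < x\<close> \<open>x < 1\<close>]
          using quarter[OF \<open>0 < x\<close> \<open>x < 1\<close>] x by (intro mult_nonneg_nonneg) auto
      qed
      then show "\<exists>y. DERIV g x :> y \<and> y \<ge> 0" using dg[OF c1 c2] by blast
    qed
  next
    case False
    then have le: "be \<le> al" by simp
    have "g al \<le> g be"
    proof -
      have "g al \<le> g be"
      proof (rule DERIV_nonpos_imp_nonincreasing[OF le, THEN order_trans[rotated]])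
        show "g al \<le> g al" by simp
      next
        fix x assume x: "be \<le> x" "x \<le> al"
        have c1: "x > 0 \<or> al = 0" using x bb by auto
        have c2: "x < 1 \<or> al = 1" using x a1 by auto
        have "g' x \<le> 0"
        proof (cases "x = 1")
          case True then have "al = 1" using x a1 by simp
          then show ?thesis using True by (simp add: g'_def)
        next
          case False
          then have "0 < x" "x < 1" using c1 c2 x bb a1 by auto
          then show ?thesis unfolding key[OF \<open>0 < x\<close> \<open>x < 1\<close>]
            using quarter[OF \<open>0 < x\<close> \<open>x < 1\<close>] x by (intro mult_nonpos_nonneg) auto
        qed
        then show "\<exists>y. DERIV g x :> y \<and> y \<le> 0" using dg[OF c1 c2] by blast
      qed
      then show ?thesis .
    qed
    then show ?thesis .
  qed
  then show ?thesis using gal by (simp add: g_def)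
qed

lemma sum_pos_supp:
  fixes a b :: "nat \<Rightarrow> real"
  assumes fin: "finite S" and a: "\<And>i. i \<in> S \<Longrightarrow> a i \<ge> 0" and b: "\<And>i. i \<in> S \<Longrightarrow> b i \<ge> 0"
    and supp: "\<And>i. i \<in> S \<Longrightarrow> a i > 0 \<Longrightarrow> b i > 0" and pos: "(\<Sum>i\<in>S. a i) > 0"
  shows "(\<Sum>i\<in>S. b i) > 0"
proof -
  have "\<exists>j\<in>S. a j \<noteq> 0"
  proof (rule ccontr)
    assume "\<not> ?thesis"
    then have "(\<Sum>i\<in>S. a i) = 0" by (intro sum.neutral) blast
    then show False using pos by simp
  qed
  then obtain j where j: "j \<in> S" "a j \<noteq> 0" by blast
  then have "a j > 0" using a[of j] by auto
  then have "b j > 0" using supp j by auto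
  then show ?thesis by (rule sum_pos2[where f=b, OF fin j(1)]) (use b in auto)
qed

lemma pinsker:
  assumes a: "a \<in> simplex n" and b: "b \<in> simplex n" and supp: "\<And>i. i < n \<Longrightarrow> a i > 0 \<Longrightarrow> b i > 0"
  shows "KL n a b \<ge> (\<Sum>i<n. \<bar>a i - b i\<bar>)\<^sup>2 / 2"
proof -
  define P where "P = {i. i < n \<and> b i \<le> a i}"
  define Q where "Q = {i. i < n \<and> a i < b i}"
  have fP: "finite P" and fQ: "finite Q" by (auto simp: P_def Q_def)
  have U: "{..<n} = P \<union> Q" and D: "P \<inter> Q = {}" by (auto simp: P_def Q_def)
  have a0: "\<And>i. i < n \<Longrightarrow> a i \<ge> 0" and b0: "\<And>i. i < n \<Longrightarrow> b i \<ge> 0"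
    using a b by (auto simp: simplex_def)
  have asum: "(\<Sum>i\<in>P. a i) + (\<Sum>i\<in>Q. a i) = 1"
    using a sum.union_disjoint[OF fP fQ D, of a] U by (simp add: simplex_def)
  have bsum: "(\<Sum>i\<in>P. b i) + (\<Sum>i\<in>Q. b i) = 1"
    using b sum.union_disjoint[OF fP fQ D, of b] U by (simp add: simplex_def)
  define al where "al = (\<Sum>i\<in>P. a i)"
  define be where "be = (\<Sum>i\<in>P. b i)"
  have aQ: "(\<Sum>i\<in>Q. a i) = 1 - al" and bQ: "(\<Sum>i\<in>Q. b i) = 1 - be"
    using asum bsum by (auto simp: al_def be_def)
  have aP0: "al \<ge> 0" unfolding al_def by (rule sum_nonneg) (use a0 in \<open>auto simp: P_def\<close>)
  have aQ0: "1 - al \<ge> 0" unfolding aQ[symmetric] by (rule sum_nonneg) (use a0 in \<open>auto simp: Q_def\<close>)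
  have bP0: "be \<ge> 0" unfolding be_def by (rule sum_nonneg) (use b0 in \<open>auto simp: P_def\<close>)
  have bQ0: "1 - be \<ge> 0" unfolding bQ[symmetric] by (rule sum_nonneg) (use b0 in \<open>auto simp: Q_def\<close>)
  have s0: "be > 0" if "al > 0"
    using sum_pos_supp[OF fP, of a b] that a0 b0 supp unfolding al_def be_def by (auto simp: P_def)
  have s1: "be < 1" if "al < 1"
  proof -
    have "(\<Sum>i\<in>Q. b i) > 0"
      using sum_pos_supp[OF fQ, of a b] that a0 b0 supp aQ by (auto simp: Q_def)
    then show ?thesis using bQ by simp
  qed
  have "KL n a b = (\<Sum>i\<in>P. a i * ln (a i / b i)) + (\<Sum>i\<in>Q. a i * ln (a i / b i))"
    unfolding KL_def U by (rule sum.union_disjoint[OF fP fQ D])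
  also have "\<dots> \<ge> al * ln (al / be) + (1 - al) * ln ((1 - al) / (1 - be))"
  proof (rule add_mono)
    show "al * ln (al / be) \<le> (\<Sum>i\<in>P. a i * ln (a i / b i))"
      unfolding al_def be_def by (rule log_sum[OF fP]) (use a0 b0 supp in \<open>auto simp: P_def\<close>)
    show "(1 - al) * ln ((1 - al) / (1 - be)) \<le> (\<Sum>i\<in>Q. a i * ln (a i / b i))"
      unfolding aQ[symmetric] bQ[symmetric] by (rule log_sum[OF fQ]) (use a0 b0 supp in \<open>auto simp: Q_def\<close>)
  qed
  finally have k: "KL n a b \<ge> 2 * (al - be)\<^sup>2"
    using bin_pinsker[OF aP0 _ bP0 _ s0 s1] aQ0 bQ0 by linarith
  have "(\<Sum>i<n. \<bar>a i - b i\<bar>) = (\<Sum>i\<in>P. \<bar>a i - b i\<bar>) + (\<Sum>i\<in>Q. \<bar>a i - b i\<bar>)"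
    unfolding U by (rule sum.union_disjoint[OF fP fQ D])
  also have "(\<Sum>i\<in>P. \<bar>a i - b i\<bar>) = (\<Sum>i\<in>P. a i - b i)"
    by (rule sum.cong) (auto simp: P_def)
  also have "(\<Sum>i\<in>Q. \<bar>a i - b i\<bar>) = (\<Sum>i\<in>Q. b i - a i)"
    by (rule sum.cong) (auto simp: Q_def)
  finally have S: "(\<Sum>i<n. \<bar>a i - b i\<bar>) = 2 * (al - be)"
    using aQ bQ by (simp add: sum_subtractf al_def be_def)
  have "(\<Sum>i<n. \<bar>a i - b i\<bar>)\<^sup>2 / 2 = 2 * (al - be)\<^sup>2" unfolding S by (simp add: power2_eq_square field_simps)
  then show ?thesis using k by simp
qed

lemma lim_lambda:
  fixes D X :: real
  assumes h: "\<And>l. 0 < l \<Longrightarrow> l < 1 \<Longrightarrow> D \<ge> (1 - l)\<^sup>2 * X"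
  shows "D \<ge> X"
proof -
  have t: "(\<lambda>k. (1 - 1 / real k)\<^sup>2 * X) \<longlonglongrightarrow> (1 - 0)\<^sup>2 * X"
    by (intro tendsto_intros lim_1_over_n)
  have "(1 - 0)\<^sup>2 * X \<le> D"
  proof (rule LIMSEQ_le_const2[OF t], intro exI allI impI)
    fix k :: nat assume "2 \<le> k"
    then show "(1 - 1 / real k)\<^sup>2 * X \<le> D" by (intro h) auto
  qed
  then show ?thesis by simp
qed

lemma xlog_split:
  fixes x m u :: real
  assumes "x \<ge> 0" "m > 0" "u > 0"
  shows "x * ln (x / u) - x * ln (x / m) = x * ln (m / u)"
proof (cases "x = 0")
  case False
  then have "x > 0" using assms by simp
  then show ?thesis using assms by (simp add: ln_div algebra_simps)
qed simp

lemma simplex_mix: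
  assumes "a \<in> simplex n" "b \<in> simplex n" "0 \<le> l" "l \<le> 1"
  shows "(\<lambda>i. (1 - l) * a i + l * b i) \<in> simplex n"
  using assms by (auto simp: simplex_def sum.distrib sum_distrib_left[symmetric])

lemma kl_strong_min:
  fixes c u P r :: "nat \<Rightarrow> real"
  assumes u: "\<And>i. i < n \<Longrightarrow> u i > 0" and P: "P \<in> simplex n" and r: "r \<in> simplex n"
    and min: "\<And>v. v \<in> simplex n \<Longrightarrow> (\<Sum>i<n. v i * c i) + KL n v u \<ge> (\<Sum>i<n. P i * c i) + KL n P u"
  shows "(\<Sum>i<n. r i * c i) + KL n r u - ((\<Sum>i<n. P i * c i) + KL n P u) \<ge> (\<Sum>i<n. \<bar>r i - P i\<bar>)\<^sup>2 / 2"
proof -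
  define J where "J v = (\<Sum>i<n. v i * c i) + KL n v u" for v
  have P0: "\<And>i. i < n \<Longrightarrow> P i \<ge> 0" and r0: "\<And>i. i < n \<Longrightarrow> r i \<ge> 0"
    using P r by (auto simp: simplex_def)
  define X where "X = (\<Sum>i<n. \<bar>r i - P i\<bar>)\<^sup>2 / 2"
  have "J r - J P \<ge> (1 - l)\<^sup>2 * X" if l: "0 < l" "l < 1" for l
  proof -
    define m where "m i = (1 - l) * P i + l * r i" for i
    have m: "m \<in> simplex n" unfolding m_def by (rule simplex_mix[OF P r]) (use l in auto)
    have m0: "m i \<ge> 0" if "i < n" for i using P0[OF that] r0[OF that] l by (simp add: m_def)
    have ident: "m i * ln (m i / u i) = (1 - l) * (P i * ln (P i / u i)) + l * (r i * ln (r i / u i))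
                  - ((1 - l) * (P i * ln (P i / m i)) + l * (r i * ln (r i / m i)))" if i: "i < n" for i
    proof (cases "m i = 0")
      case True
      have a1: "(1 - l) * P i \<ge> 0" "l * r i \<ge> 0" using P0[OF i] r0[OF i] l by simp_all
      then have "(1 - l) * P i = 0" "l * r i = 0" using True unfolding m_def by linarith+
      then have "P i = 0" "r i = 0" using l by simp_all
      then show ?thesis using True by simp
    next
      case False
      then have mp: "m i > 0" using m0[OF i] by simp
      have "(1 - l) * (P i * ln (P i / u i)) + l * (r i * ln (r i / u i))
                  - ((1 - l) * (P i * ln (P i / m i)) + l * (r i * ln (r i / m i)))
            = (1 - l) * (P i * ln (P i / u i) - P i * ln (P i / m i)) + l * (r i * ln (r i / u i) - r i * ln (r i / m i))"
        by (simp add: algebra_simps)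
      also have "\<dots> = (1 - l) * (P i * ln (m i / u i)) + l * (r i * ln (m i / u i))"
        using xlog_split[OF P0[OF i] mp u[OF i]] xlog_split[OF r0[OF i] mp u[OF i]] by simp
      also have "\<dots> = m i * ln (m i / u i)" by (simp add: m_def algebra_simps)
      finally show ?thesis by simp
    qed
    have lin: "(\<Sum>i<n. m i * c i) = (1 - l) * (\<Sum>i<n. P i * c i) + l * (\<Sum>i<n. r i * c i)"
    proof -
      have "(\<Sum>i<n. m i * c i) = (\<Sum>i<n. (1 - l) * (P i * c i) + l * (r i * c i))"
        by (rule sum.cong) (simp_all add: m_def algebra_simps)
      then show ?thesis by (simp add: sum.distrib sum_distrib_left)
    qed
    have klm: "KL n m u = (1 - l) * KL n P u + l * KL n r u - ((1 - l) * KL n P m + l * KL n r m)"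
      unfolding KL_def using ident
      by (simp add: sum.distrib sum_subtractf sum_distrib_left)
    have Jm: "J m = (1 - l) * J P + l * J r - ((1 - l) * KL n P m + l * KL n r m)"
      unfolding J_def lin klm by (simp add: algebra_simps)
    have "J P \<le> J m" using min[OF m] by (simp add: J_def)
    have kP: "KL n P m \<ge> 0"
      by (rule order_trans[OF _ pinsker[OF P m]]) (use l P0 r0 in \<open>auto simp: m_def intro!: add_pos_nonneg\<close>)
    have kr: "KL n r m \<ge> (\<Sum>i<n. \<bar>r i - m i\<bar>)\<^sup>2 / 2"
      by (rule pinsker[OF r m]) (use l P0 r0 in \<open>auto simp: m_def intro!: add_nonneg_pos\<close>)
    have "(\<Sum>i<n. \<bar>r i - m i\<bar>) = (1 - l) * (\<Sum>i<n. \<bar>r i - P i\<bar>)"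
    proof -
      have "\<bar>r i - m i\<bar> = (1 - l) * \<bar>r i - P i\<bar>" for i
      proof -
        have "r i - m i = (1 - l) * (r i - P i)" by (simp add: m_def algebra_simps)
        then show ?thesis using l by (simp add: abs_mult)
      qed
      then show ?thesis by (simp add: sum_distrib_left)
    qed
    then have kr2: "KL n r m \<ge> (1 - l)\<^sup>2 * X" using kr by (simp add: X_def power_mult_distrib)
    have c1: "l * (J r - J P) \<ge> (1 - l) * KL n P m + l * KL n r m"
      using \<open>J P \<le> J m\<close> Jm by (simp add: algebra_simps)
    have c2: "(1 - l) * KL n P m + l * KL n r m \<ge> l * ((1 - l)\<^sup>2 * X)"
    proof -
      have "(1 - l) * KL n P m \<ge> 0" using kP l by simp
      moreover have "l * KL n r m \<ge> l * ((1 - l)\<^sup>2 * X)" using kr2 l by (simp add: mult_left_mono)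
      ultimately show ?thesis by linarith
    qed
    have "l * ((1 - l)\<^sup>2 * X) \<le> l * (J r - J P)" using c1 c2 by linarith
    then show ?thesis using l by simp
  qed
  then have "J r - J P \<ge> X" by (rule lim_lambda)
  then show ?thesis by (simp add: J_def X_def)
qed

definition Gv :: "nat \<Rightarrow> (nat \<Rightarrow> nat \<Rightarrow> real) \<Rightarrow> (nat \<Rightarrow> real) \<Rightarrow> (nat \<Rightarrow> real) \<Rightarrow> nat \<Rightarrow> real" where
  "Gv n x y r k = (\<Sum>i<n. r i * y i * x i k)"

definition Phi :: "real \<Rightarrow> nat \<Rightarrow> real \<Rightarrow> (nat \<Rightarrow> real) \<Rightarrow> real" where
  "Phi p d eta th = eta / (2 * (p - 1)) * (lpnorm p d th)\<^sup>2"

definition psi :: "real \<Rightarrow> nat \<Rightarrow> (nat \<Rightarrow> real) \<Rightarrow> real" where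
  "psi q d w = 1 / (2 * (q - 1)) * (lpnorm q d w)\<^sup>2"

lemma ip_add: "ip d (\<lambda>k. a k + b k) w = ip d a w + ip d b w"
  by (simp add: ip_def sum.distrib algebra_simps)

lemma ip_diff: "ip d (\<lambda>k. a k - b k) w = ip d a w - ip d b w"
  by (simp add: ip_def sum_subtractf algebra_simps)

lemma ip_sum: "ip d (\<lambda>k. \<Sum>j\<in>A. f j k) w = (\<Sum>j\<in>A. ip d (f j) w)"
  by (simp add: ip_def sum_distrib_right sum.swap[of _ A])

lemma ip_scale: "ip d a (\<lambda>k. c * w k) = c * ip d a w"
  by (simp add: ip_def sum_distrib_left algebra_simps)

lemma gval_ip: "gval d n x y w r = ip d (Gv n x y r) w"
proof -
  have "gval d n x y w r = (\<Sum>i<n. \<Sum>k<d. r i * y i * x i k * w k)"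
    by (simp add: gval_def Aw_def sum_distrib_left algebra_simps)
  also have "\<dots> = (\<Sum>k<d. \<Sum>i<n. r i * y i * x i k * w k)" by (rule sum.swap)
  also have "\<dots> = ip d (Gv n x y r) w" by (simp add: ip_def Gv_def sum_distrib_right)
  finally show ?thesis .
qed

lemma gval_Aw: "gval d n x y w r = (\<Sum>i<n. r i * Aw d x y w i)"
  by (simp add: gval_def)

lemma Gv_diff: "Gv n x y (\<lambda>i. r i - s i) k = Gv n x y r k - Gv n x y s k"
  by (simp add: Gv_def sum_subtractf algebra_simps)

lemma FY:
  assumes p: "p > 1" and pq: "1/p + 1/q = 1" and eta: "eta > 0"
  shows "ip d th w - psi q d w / eta \<le> Phi p d eta th"
proof -
  have q: "q > 1" and pq1: "(p-1)*(q-1) = 1" using pq_rel[OF p pq] by auto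
  define a where "a = lpnorm p d th"
  define b where "b = lpnorm q d w"
  have "ip d th w \<le> a * b" using holder_ip[OF p q pq, of d th w] by (simp add: a_def b_def)
  moreover have "a * b \<le> eta * a\<^sup>2 / (2 * (p-1)) + (p-1) * b\<^sup>2 / (2 * eta)"
  proof -
    have "0 \<le> (eta * a - (p-1) * b)\<^sup>2" by simp
    then have h: "(a * b) * (2 * eta * (p-1)) \<le> eta\<^sup>2 * a\<^sup>2 + (p-1)\<^sup>2 * b\<^sup>2"
      by (simp add: power2_eq_square algebra_simps)
    have pos: "2 * eta * (p-1) > 0" using p eta by simp
    have "a * b \<le> (eta\<^sup>2 * a\<^sup>2 + (p-1)\<^sup>2 * b\<^sup>2) / (2 * eta * (p-1))"
      using h pos by (simp add: le_divide_eq)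
    moreover have "eta * a\<^sup>2 / (2 * (p-1)) + (p-1) * b\<^sup>2 / (2 * eta)
        = (eta\<^sup>2 * a\<^sup>2 + (p-1)\<^sup>2 * b\<^sup>2) / (2 * eta * (p-1))"
      using p eta by (simp add: field_simps power2_eq_square)
    ultimately show ?thesis by simp
  qed
  moreover have "psi q d w / eta = (p-1) * b\<^sup>2 / (2 * eta)"
  proof -
    have "1 / (q - 1) = p - 1" using pq1 q by (simp add: field_simps)
    then have h: "1 / (2 * (q - 1)) = (p - 1) / 2" by (metis divide_divide_eq_left' times_divide_eq_left mult.commute div_by_1 divide_divide_eq_left)
    have "psi q d w / eta = 1 / (2 * (q - 1)) * b\<^sup>2 / eta" by (simp add: psi_def b_def)
    also have "\<dots> = (p - 1) * b\<^sup>2 / (2 * eta)" unfolding h by simp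
    finally show ?thesis .
  qed
  ultimately show ?thesis by (simp add: Phi_def a_def mult.commute)
qed

lemma attain:
  assumes p: "p > 1" and pq: "1/p + 1/q = 1" and eta: "eta > 0"
  shows "\<exists>v\<in>vecs d. ip d th v - psi q d v / eta \<ge> Phi p d eta th"
proof -
  have q: "q > 1" and pq1: "(p-1)*(q-1) = 1" using pq_rel[OF p pq] by auto
  obtain v0 where v0: "v0 \<in> vecs d" "lpnorm q d v0 \<le> 1" "ip d th v0 = lpnorm p d th"
    using dual_vec[OF p pq] by blast
  define N where "N = lpnorm p d th"
  define c where "c = eta * N / (p - 1)"
  have c0: "c \<ge> 0" using eta p by (simp add: c_def N_def lpnorm_nonneg)
  define v where "v k = c * v0 k" for k
  have vv: "v \<in> vecs d" using v0(1) by (simp add: vecs_def v_def)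
  have "ip d th v = c * ip d th v0" unfolding v_def[abs_def] by (rule ip_scale)
  then have ipv: "ip d th v = eta * N\<^sup>2 / (p - 1)"
    using v0(3) by (simp add: c_def N_def power2_eq_square)
  have nv: "lpnorm q d v \<le> c"
    using lpnorm_scale[of q d c v0] q c0 v0(2) by (simp add: v_def[abs_def] mult_left_le)
  have "psi q d v / eta \<le> c\<^sup>2 / (2 * (q - 1) * eta)"
  proof -
    have "(lpnorm q d v)\<^sup>2 \<le> c\<^sup>2" using nv lpnorm_nonneg by (simp add: power_mono)
    then show ?thesis unfolding psi_def using q eta by (simp add: divide_right_mono)
  qed
  also have "c\<^sup>2 / (2 * (q - 1) * eta) = eta * N\<^sup>2 / (2 * (p - 1))"
  proof -
    have "1 / (q - 1) = p - 1" using pq1 q by (simp add: field_simps)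
    then have h: "1 / (2 * (q - 1)) = (p - 1) / 2" by (metis divide_divide_eq_left' times_divide_eq_left mult.commute div_by_1 divide_divide_eq_left)
    have "c\<^sup>2 / (2 * (q - 1) * eta) = 1 / (2 * (q - 1)) * c\<^sup>2 / eta" by simp
    also have "\<dots> = (p - 1) / 2 * c\<^sup>2 / eta" unfolding h ..
    also have "\<dots> = eta * N\<^sup>2 / (2 * (p - 1))"
    proof -
      have r: "p - 1 > 0" using p by simp
      have "\<And>r::real. r > 0 \<Longrightarrow> r / 2 * (eta * N / r)\<^sup>2 / eta = eta * N\<^sup>2 / (2 * r)"
        using eta by (simp add: field_simps power2_eq_square)
      from this[OF r] show ?thesis by (simp add: c_def)
    qed
    finally show ?thesis .
  qed
  finally have "ip d th v - psi q d v / eta \<ge> ip d th v - eta * N\<^sup>2 / (2 * (p - 1))"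
    by (rule diff_left_mono)
  then have "ip d th v - psi q d v / eta \<ge> eta * N\<^sup>2 / (p - 1) - eta * N\<^sup>2 / (2 * (p - 1))"
    unfolding ipv .
  moreover have "eta * N\<^sup>2 / (p - 1) - eta * N\<^sup>2 / (2 * (p - 1)) = Phi p d eta th"
  proof -
    have "\<And>r::real. r > 0 \<Longrightarrow> eta * N\<^sup>2 / r - eta * N\<^sup>2 / (2 * r) = eta / (2 * r) * N\<^sup>2"
      by (simp add: field_simps)
    from this[of "p - 1"] p show ?thesis by (simp add: Phi_def N_def)
  qed
  ultimately show ?thesis using vv by auto
qed

lemma smooth_Phi:
  assumes p: "p \<ge> 2" and eta: "eta > 0"
    and sub: "\<And>z. Phi p d eta z \<ge> Phi p d eta th + ip d (\<lambda>k. z k - th k) g"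
  shows "Phi p d eta (\<lambda>k. th k + dl k) \<le> Phi p d eta th + ip d dl g + eta / 2 * (lpnorm p d dl)\<^sup>2"
proof -
  define s where "s = 2 * (p - 1) / eta"
  have s0: "s > 0" using p eta by (simp add: s_def)
  have Phi_eq: "(lpnorm p d z)\<^sup>2 = s * Phi p d eta z" for z
    using p eta by (simp add: Phi_def s_def field_simps)
  have sub2: "(lpnorm p d z)\<^sup>2 \<ge> (lpnorm p d th)\<^sup>2 + ip d (\<lambda>k. z k - th k) (\<lambda>k. s * g k)" for z
  proof -
    have "s * Phi p d eta z \<ge> s * (Phi p d eta th + ip d (\<lambda>k. z k - th k) g)"
      using sub[of z] s0 by (simp add: mult_left_mono)
    then show ?thesis by (simp add: Phi_eq ip_scale algebra_simps)
  qed
  have "(lpnorm p d (\<lambda>k. th k + dl k))\<^sup>2 \<le> (lpnorm p d th)\<^sup>2 + ip d dl (\<lambda>k. s * g k) + (p-1) * (lpnorm p d dl)\<^sup>2"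
    by (rule smooth[OF p sub2])
  moreover have "(lpnorm p d (\<lambda>k. th k + dl k))\<^sup>2 = s * Phi p d eta (\<lambda>k. th k + dl k)" by (rule Phi_eq)
  moreover have "(lpnorm p d th)\<^sup>2 = s * Phi p d eta th" by (rule Phi_eq)
  moreover have "ip d dl (\<lambda>k. s * g k) = s * ip d dl g" by (rule ip_scale)
  moreover have "(p-1) * (lpnorm p d dl)\<^sup>2 = s * (eta / 2 * (lpnorm p d dl)\<^sup>2)"
    using eta by (simp add: s_def field_simps)
  ultimately have "s * Phi p d eta (\<lambda>k. th k + dl k) \<le> s * Phi p d eta th + s * ip d dl g + s * (eta / 2 * (lpnorm p d dl)\<^sup>2)"
    by simp
  then have "s * Phi p d eta (\<lambda>k. th k + dl k) \<le> s * (Phi p d eta th + ip d dl g + eta / 2 * (lpnorm p d dl)\<^sup>2)"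
    by (simp add: distrib_left)
  then show ?thesis using s0 by simp
qed

lemma Gv_norm:
  assumes p: "p > 1" and pq: "1/p + 1/q = 1"
    and xn: "\<And>i. i < n \<Longrightarrow> lpnorm p d (x i) \<le> 1 \<and> y i \<in> {-1, 1}"
  shows "lpnorm p d (Gv n x y r) \<le> (\<Sum>i<n. \<bar>r i\<bar>)"
proof -
  have q: "q > 1" using pq_rel[OF p pq] by auto
  obtain v where v: "lpnorm q d v \<le> 1" "ip d (Gv n x y r) v = lpnorm p d (Gv n x y r)"
    using dual_vec[OF p pq] by blast
  have "ip d (Gv n x y r) v = (\<Sum>i<n. r i * y i * ip d (x i) v)"
  proof -
    have "ip d (Gv n x y r) v = (\<Sum>k<d. \<Sum>i<n. r i * y i * x i k * v k)"
      by (simp add: ip_def Gv_def sum_distrib_right)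
    also have "\<dots> = (\<Sum>i<n. \<Sum>k<d. r i * y i * x i k * v k)" by (rule sum.swap)
    also have "\<dots> = (\<Sum>i<n. r i * y i * ip d (x i) v)" by (simp add: ip_def sum_distrib_left algebra_simps)
    finally show ?thesis .
  qed
  also have "\<dots> \<le> (\<Sum>i<n. \<bar>r i\<bar>)"
  proof (rule sum_mono)
    fix i assume "i \<in> {..<n}"
    then have i: "lpnorm p d (x i) \<le> 1" "\<bar>y i\<bar> = 1" using xn[of i] by auto
    have "\<bar>ip d (x i) v\<bar> \<le> lpnorm p d (x i) * lpnorm q d v" by (rule holder_ip[OF p q pq])
    also have "\<dots> \<le> 1 * 1" using i v(1) by (intro mult_mono) (auto simp: lpnorm_nonneg)
    finally have "\<bar>ip d (x i) v\<bar> \<le> 1" by simp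
    then have "\<bar>r i * y i * ip d (x i) v\<bar> \<le> \<bar>r i\<bar>"
      using i by (simp add: abs_mult mult_left_le)
    then show "r i * y i * ip d (x i) v \<le> \<bar>r i\<bar>" by simp
  qed
  finally show ?thesis using v(2) by simp
qed

lemma Icc_insert: "1 \<le> t \<Longrightarrow> {1..t} = insert t {1..<(t::nat)}" by auto
lemma Icc_pred: "1 \<le> t \<Longrightarrow> {1..t-1} = {1..<(t::nat)}" by auto

context
  fixes p q :: real and d n :: nat and x :: "nat \<Rightarrow> nat \<Rightarrow> real" and y :: "nat \<Rightarrow> real"
    and eta :: real and ww pp :: "nat \<Rightarrow> nat \<Rightarrow> real" and T :: nat
  assumes p2: "2 \<le> p" and pq: "1 / p + 1 / q = 1" and eta: "eta > 0" and n2: "2 \<le> n"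
    and xn: "\<forall>i<n. x i \<in> vecs d \<and> lpnorm p d (x i) \<le> 1 \<and> y i \<in> {-1, 1}"
    and pp0: "pp 0 = (\<lambda>i. if i < n then 1 / real n else 0)"
    and hyp: "\<forall>t\<in>{1..T}.
          ww t \<in> vecs d \<and>
          (\<forall>w\<in>vecs d.
             eta * ((\<Sum>j\<in>{1..<t}. - gval d n x y w (pp j)) + (- gval d n x y w (pp (t - 1))))
               + 1 / (2 * (q - 1)) * (lpnorm q d w)\<^sup>2
             \<ge> eta * ((\<Sum>j\<in>{1..<t}. - gval d n x y (ww t) (pp j)) + (- gval d n x y (ww t) (pp (t - 1))))
               + 1 / (2 * (q - 1)) * (lpnorm q d (ww t))\<^sup>2) \<and>
          pp t \<in> simplex n \<and>
          (\<forall>r\<in>simplex n.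
             1 / eta * (\<Sum>s\<in>{1..t}. gval d n x y (ww s) r) + KL n r (pp 0)
             \<ge> 1 / eta * (\<Sum>s\<in>{1..t}. gval d n x y (ww s) (pp t)) + KL n (pp t) (pp 0))"
begin

lemma p1: "p > 1" using p2 by simp

lemma xn': "\<And>i. i < n \<Longrightarrow> lpnorm p d (x i) \<le> 1 \<and> y i \<in> {-1, 1}" using xn by auto

lemma w_regret:
  "(\<Sum>t\<in>{1..T}. gval d n x y u (pp t)) - psi q d u / eta
    \<le> (\<Sum>t\<in>{1..T}. gval d n x y (ww t) (pp t)) + eta / 2 * (\<Sum>t\<in>{1..T}. (\<Sum>i<n. \<bar>pp t i - pp (t - 1) i\<bar>)\<^sup>2)"
proof -
  define G where "G j = Gv n x y (pp j)" for j
  define S where "S t = (\<lambda>k. \<Sum>j\<in>{1..t}. G j k)" for t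
  define Th where "Th t = (\<lambda>k. (\<Sum>j\<in>{1..<t}. G j k) + G (t - 1) k)" for t
  define F where "F t = gval d n x y (ww t) (pp t) + eta / 2 * (\<Sum>i<n. \<bar>pp t i - pp (t - 1) i\<bar>)\<^sup>2" for t
  have ipTh: "ip d (Th t) w = (\<Sum>j\<in>{1..<t}. gval d n x y w (pp j)) + gval d n x y w (pp (t - 1))" for t w
    unfolding Th_def ip_add ip_sum G_def gval_ip ..
  have ipS: "ip d (S t) w = (\<Sum>j\<in>{1..t}. gval d n x y w (pp j))" for t w
    unfolding S_def ip_sum G_def gval_ip ..
  have step: "Phi p d eta (S t) \<le> Phi p d eta (S (t - 1)) + F t" if t: "t \<in> {1..T}" for t
  proof -
    define wt where "wt = ww t"
    have H: "wt \<in> vecs d" "\<And>w. w \<in> vecs d \<Longrightarrow>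
        eta * (- ip d (Th t) w) + psi q d w \<ge> eta * (- ip d (Th t) wt) + psi q d wt"
      using hyp t unfolding wt_def ipTh psi_def by (auto simp: sum_negf)
    define V where "V = ip d (Th t) wt - psi q d wt / eta"
    have Vge: "V \<ge> ip d (Th t) w - psi q d w / eta" if "w \<in> vecs d" for w
    proof -
      have "eta * (ip d (Th t) w - psi q d w / eta) \<le> eta * V"
        using H(2)[OF that] eta by (simp add: V_def algebra_simps)
      then show ?thesis using eta by simp
    qed
    obtain v where "v \<in> vecs d" "ip d (Th t) v - psi q d v / eta \<ge> Phi p d eta (Th t)"
      using attain[OF p1 pq eta] by blast
    then have VPhi: "V \<ge> Phi p d eta (Th t)" using Vge by fastforce
    have sub: "Phi p d eta z \<ge> Phi p d eta (Th t) + ip d (\<lambda>k. z k - Th t k) wt" for z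
    proof -
      have "Phi p d eta z \<ge> ip d z wt - psi q d wt / eta" by (rule FY[OF p1 pq eta])
      moreover have "ip d z wt - psi q d wt / eta = V + ip d (\<lambda>k. z k - Th t k) wt"
        by (simp add: V_def ip_diff)
      ultimately show ?thesis using VPhi by linarith
    qed
    define dl where "dl = (\<lambda>k. G t k - G (t - 1) k)"
    have sm: "Phi p d eta (\<lambda>k. Th t k + dl k) \<le> Phi p d eta (Th t) + ip d dl wt + eta / 2 * (lpnorm p d dl)\<^sup>2"
      by (rule smooth_Phi[OF p2 eta sub])
    have t1: "1 \<le> t" using t by simp
    have St: "S t = (\<lambda>k. Th t k + dl k)"
    proof (rule ext)
      fix k
      have "(\<Sum>j\<in>{1..t}. G j k) = G t k + (\<Sum>j\<in>{1..<t}. G j k)"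
        unfolding Icc_insert[OF t1] by (rule sum.insert) auto
      then show "S t k = Th t k + dl k" unfolding S_def Th_def dl_def by simp
    qed
    have St1: "S t = (\<lambda>k. S (t - 1) k + G t k)"
    proof (rule ext)
      fix k
      have "(\<Sum>j\<in>{1..t}. G j k) = G t k + (\<Sum>j\<in>{1..<t}. G j k)"
        unfolding Icc_insert[OF t1] by (rule sum.insert) auto
      then show "S t k = S (t - 1) k + G t k" unfolding S_def Icc_pred[OF t1] by simp
    qed
    have ndl: "(lpnorm p d dl)\<^sup>2 \<le> (\<Sum>i<n. \<bar>pp t i - pp (t - 1) i\<bar>)\<^sup>2"
    proof -
      have "dl = Gv n x y (\<lambda>i. pp t i - pp (t - 1) i)"
        by (simp add: dl_def G_def Gv_diff fun_eq_iff)
      then have "lpnorm p d dl \<le> (\<Sum>i<n. \<bar>pp t i - pp (t - 1) i\<bar>)"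
        using Gv_norm[OF p1 pq xn'] by simp
      then show ?thesis using lpnorm_nonneg by (simp add: power_mono)
    qed
    have "V + ip d dl wt = ip d (S (t - 1)) wt - psi q d wt / eta + ip d (G t) wt"
    proof -
      have "ip d (S t) wt = ip d (Th t) wt + ip d dl wt" unfolding St ip_add ..
      moreover have "ip d (S t) wt = ip d (S (t - 1)) wt + ip d (G t) wt"
        by (subst St1) (rule ip_add)
      ultimately show ?thesis by (simp add: V_def)
    qed
    also have "\<dots> \<le> Phi p d eta (S (t - 1)) + gval d n x y wt (pp t)"
      using FY[OF p1 pq eta, of d "S (t - 1)" wt] by (simp add: G_def gval_ip)
    finally have f1: "V + ip d dl wt \<le> Phi p d eta (S (t - 1)) + gval d n x y wt (pp t)" .
    have e2: "eta / 2 * (lpnorm p d dl)\<^sup>2 \<le> eta / 2 * (\<Sum>i<n. \<bar>pp t i - pp (t - 1) i\<bar>)\<^sup>2"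
      by (rule mult_left_mono[OF ndl]) (use eta in simp)
    have sm': "Phi p d eta (S t) \<le> Phi p d eta (Th t) + ip d dl wt + eta / 2 * (lpnorm p d dl)\<^sup>2"
      using sm unfolding St[symmetric] .
    show ?thesis unfolding F_def wt_def[symmetric] using sm' VPhi f1 e2 by linarith
  qed
  have tele: "m \<le> T \<Longrightarrow> Phi p d eta (S m) \<le> (\<Sum>t\<in>{1..m}. F t)" for m
  proof (induction m)
    case 0
    have "S 0 = (\<lambda>k. 0)" by (simp add: S_def fun_eq_iff)
    then show ?case by (simp add: Phi_def lpnorm_def)
  next
    case (Suc m)
    have "Phi p d eta (S (Suc m)) \<le> Phi p d eta (S m) + F (Suc m)"
      using step[of "Suc m"] Suc.prems by simp
    also have "\<dots> \<le> (\<Sum>t\<in>{1..m}. F t) + F (Suc m)" using Suc by simp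
    finally show ?case by simp
  qed
  have "(\<Sum>t\<in>{1..T}. gval d n x y u (pp t)) - psi q d u / eta \<le> Phi p d eta (S T)"
    using FY[OF p1 pq eta, of d "S T" u] unfolding ipS .
  also have "\<dots> \<le> (\<Sum>t\<in>{1..T}. F t)" by (rule tele) simp
  finally show ?thesis by (simp add: F_def sum.distrib sum_distrib_left)
qed

lemma u_pos: "i < n \<Longrightarrow> pp 0 i > 0" using n2 by (simp add: pp0)

lemma u_simplex: "pp 0 \<in> simplex n"
  using n2 by (simp add: simplex_def pp0)

lemma pp_simplex: "t \<le> T \<Longrightarrow> pp t \<in> simplex n"
  using hyp u_simplex by (cases "t = 0") auto

lemma KL_nonneg: "v \<in> simplex n \<Longrightarrow> KL n v (pp 0) \<ge> 0"
  by (rule order_trans[OF _ pinsker[OF _ u_simplex]]) (auto intro: u_pos)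

lemma KL_self: "KL n (pp 0) (pp 0) = 0"
  by (simp add: KL_def pp0)

lemma p_regret:
  assumes i: "i < n" and T1: "1 \<le> T"
  shows "(\<Sum>t\<in>{1..T}. gval d n x y (ww t) (pp t)) + eta / 2 * (\<Sum>t\<in>{1..T}. (\<Sum>i<n. \<bar>pp t i - pp (t - 1) i\<bar>)\<^sup>2)
    \<le> (\<Sum>t\<in>{1..T}. Aw d x y (ww t) i) + eta * ln n"
proof -
  define c where "c t i = 1 / eta * (\<Sum>s\<in>{1..t}. Aw d x y (ww s) i)" for t i
  define J where "J t r = (\<Sum>i<n. r i * c t i) + KL n r (pp 0)" for t r
  have Jeq: "J t r = 1 / eta * (\<Sum>s\<in>{1..t}. gval d n x y (ww s) r) + KL n r (pp 0)" for t r
  proof -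
    have "(\<Sum>i<n. r i * c t i) = 1 / eta * (\<Sum>i<n. \<Sum>s\<in>{1..t}. r i * Aw d x y (ww s) i)"
      by (simp add: c_def sum_distrib_left algebra_simps)
    also have "\<dots> = 1 / eta * (\<Sum>s\<in>{1..t}. gval d n x y (ww s) r)"
      by (simp add: gval_Aw sum.swap[of _ "{..<n}"])
    finally show ?thesis by (simp add: J_def)
  qed
  have mins: "J t v \<ge> J t (pp t)" if "t \<le> T" "v \<in> simplex n" for t v
  proof (cases "t = 0")
    case True
    then show ?thesis using KL_nonneg[OF that(2)] KL_self by (simp add: Jeq)
  next
    case False
    then have "t \<in> {1..T}" using that by simp
    then show ?thesis using hyp that(2) by (simp add: Jeq)
  qed
  define D where "D t = (\<Sum>i<n. \<bar>pp t i - pp (t - 1) i\<bar>)\<^sup>2" for t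
  have strong: "J (t - 1) (pp t) - J (t - 1) (pp (t - 1)) \<ge> D t / 2" if t: "t \<in> {1..T}" for t
  proof -
    have "(\<Sum>i<n. pp t i * c (t - 1) i) + KL n (pp t) (pp 0) - ((\<Sum>i<n. pp (t - 1) i * c (t - 1) i) + KL n (pp (t - 1)) (pp 0))
          \<ge> (\<Sum>i<n. \<bar>pp t i - pp (t - 1) i\<bar>)\<^sup>2 / 2"
    proof (rule kl_strong_min[OF u_pos])
      show "pp (t - 1) \<in> simplex n" "pp t \<in> simplex n" using t by (auto intro: pp_simplex)
      fix v assume "v \<in> simplex n"
      then show "(\<Sum>i<n. pp (t - 1) i * c (t - 1) i) + KL n (pp (t - 1)) (pp 0) \<le> (\<Sum>i<n. v i * c (t - 1) i) + KL n v (pp 0)"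
      proof -
        have "t - 1 \<le> T" using t by auto
        from mins[OF this \<open>v \<in> simplex n\<close>] show ?thesis unfolding J_def .
      qed
    qed
    then show ?thesis by (simp add: J_def D_def)
  qed
  have Jsplit: "J t (pp t) = J (t - 1) (pp t) + 1 / eta * gval d n x y (ww t) (pp t)" if t: "1 \<le> t" for t
  proof -
    have "(\<Sum>s\<in>{1..t}. gval d n x y (ww s) (pp t)) = gval d n x y (ww t) (pp t) + (\<Sum>s\<in>{1..<t}. gval d n x y (ww s) (pp t))"
      unfolding Icc_insert[OF t] by (rule sum.insert) auto
    then show ?thesis unfolding Jeq Icc_pred[OF t] by (simp add: algebra_simps)
  qed
  have tele: "m \<le> T \<Longrightarrow> J m (pp m) - J 0 (pp 0) \<ge> (\<Sum>t\<in>{1..m}. 1 / eta * gval d n x y (ww t) (pp t) + D t / 2)" for m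
  proof (induction m)
    case 0 then show ?case by simp
  next
    case (Suc m)
    have "J (Suc m) (pp (Suc m)) - J m (pp m) \<ge> 1 / eta * gval d n x y (ww (Suc m)) (pp (Suc m)) + D (Suc m) / 2"
      using Jsplit[of "Suc m"] strong[of "Suc m"] Suc.prems by simp
    then show ?case using Suc by simp
  qed
  have J0: "J 0 (pp 0) = 0" using KL_self by (simp add: J_def c_def)
  define e where "e j = (if j = i then 1 else 0 :: real)" for j
  have e: "e \<in> simplex n" using i by (simp add: simplex_def e_def)
  have JT: "J T (pp T) \<le> J T e" by (rule mins[OF order_refl e])
  have "J T e = 1 / eta * (\<Sum>s\<in>{1..T}. Aw d x y (ww s) i) + ln n"
  proof -
    have "(\<Sum>j<n. e j * c T j) = (\<Sum>j<n. if j = i then c T i else 0)"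
      by (rule sum.cong) (auto simp: e_def)
    then have "(\<Sum>j<n. e j * c T j) = c T i" using i by simp
    moreover have "KL n e (pp 0) = ln n"
    proof -
      have "KL n e (pp 0) = (\<Sum>j<n. if j = i then ln (1 / (1 / real n)) else 0)"
        unfolding KL_def by (rule sum.cong) (auto simp: e_def pp0)
      also have "\<dots> = ln n" using i by simp
      finally show ?thesis .
    qed
    ultimately show ?thesis by (simp add: J_def c_def)
  qed
  then have "(\<Sum>t\<in>{1..T}. 1 / eta * gval d n x y (ww t) (pp t) + D t / 2) \<le> 1 / eta * (\<Sum>s\<in>{1..T}. Aw d x y (ww s) i) + ln n"
    using tele[OF order_refl] J0 JT by linarith
  then have "eta * ((\<Sum>t\<in>{1..T}. 1 / eta * gval d n x y (ww t) (pp t) + D t / 2)) \<le> eta * (1 / eta * (\<Sum>s\<in>{1..T}. Aw d x y (ww s) i) + ln n)"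
    using eta by (simp add: mult_left_mono)
  moreover have "eta * ((\<Sum>t\<in>{1..T}. 1 / eta * gval d n x y (ww t) (pp t) + D t / 2))
     = (\<Sum>t\<in>{1..T}. gval d n x y (ww t) (pp t)) + eta / 2 * (\<Sum>t\<in>{1..T}. D t)"
  proof -
    have a1: "eta * (\<Sum>t\<in>{1..T}. 1 / eta * gval d n x y (ww t) (pp t)) = (\<Sum>t\<in>{1..T}. gval d n x y (ww t) (pp t))"
      using eta by (simp add: sum_distrib_left)
    have a2: "eta * (\<Sum>t\<in>{1..T}. D t / 2) = eta / 2 * (\<Sum>t\<in>{1..T}. D t)"
      by (simp add: sum_divide_distrib[symmetric])
    show ?thesis unfolding sum.distrib distrib_left a1 a2 ..
  qed
  moreover have "eta * (1 / eta * (\<Sum>s\<in>{1..T}. Aw d x y (ww s) i) + ln n) = (\<Sum>s\<in>{1..T}. Aw d x y (ww s) i) + eta * ln n"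
    using eta by (simp add: distrib_left)
  ultimately show ?thesis by (simp add: D_def)
qed

lemma final_alg:
  fixes Q e TT g L :: real
  assumes Q: "Q > 0" and e: "e > 0" and h: "Q * (TT * g)\<^sup>2 \<ge> 2 * L"
  shows "TT * (g * Q * e * TT) * g - (g * Q * e * TT)\<^sup>2 / (2 * Q * e) - e * L \<ge> 0"
proof -
  have "TT * (g * Q * e * TT) * g - (g * Q * e * TT)\<^sup>2 / (2 * Q * e) - e * L = e * (Q * (TT * g)\<^sup>2 / 2 - L)"
    using Q e by (simp add: field_simps power2_eq_square)
  also have "\<dots> \<ge> 0" using e h by simp
  finally show ?thesis .
qed

lemma margin_sum:
  assumes i: "i < n" and T1: "1 \<le> T" and g: "0 < gam"
    and ws: "lpnorm q d wstar \<le> 1" and wm: "\<forall>i<n. gam \<le> Aw d x y wstar i"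
    and Tb: "real T \<ge> sqrt (2 * (p - 1) * ln (real n)) / gam"
  shows "(\<Sum>t\<in>{1..T}. Aw d x y (ww t) i) \<ge> 0"
proof -
  have q1: "q > 1" and pq1: "(p-1)*(q-1) = 1" using pq_rel[OF p1 pq] by auto
  define Q where "Q = q - 1"
  have Q: "Q > 0" using q1 by (simp add: Q_def)
  define c where "c = gam * Q * eta * T"
  have c0: "c \<ge> 0" using g Q eta by (simp add: c_def)
  define u where "u k = c * wstar k" for k
  have gu: "gval d n x y u r = c * gval d n x y wstar r" for r
    by (simp add: gval_Aw Aw_def u_def sum_distrib_left algebra_simps)
  have gw: "gval d n x y wstar (pp t) \<ge> gam" if "t \<in> {1..T}" for t
  proof -
    have s: "pp t \<in> simplex n" using pp_simplex that by simp
    have "(\<Sum>i<n. pp t i * gam) \<le> (\<Sum>i<n. pp t i * Aw d x y wstar i)"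
      by (rule sum_mono) (use s wm in \<open>auto simp: simplex_def intro!: mult_left_mono\<close>)
    moreover have "(\<Sum>i<n. pp t i * gam) = gam" using s by (simp add: simplex_def sum_distrib_right[symmetric])
    ultimately show ?thesis by (simp add: gval_Aw)
  qed
  have lhs: "(\<Sum>t\<in>{1..T}. gval d n x y u (pp t)) \<ge> T * c * gam"
  proof -
    have "(\<Sum>t\<in>{1..T}. gval d n x y u (pp t)) \<ge> (\<Sum>t\<in>{1..T}. c * gam)"
      unfolding gu by (rule sum_mono) (use gw c0 in \<open>simp add: mult_left_mono\<close>)
    then show ?thesis by simp
  qed
  have psiu: "psi q d u \<le> c\<^sup>2 / (2 * Q)"
  proof -
    have "lpnorm q d u = c * lpnorm q d wstar"
      using lpnorm_scale[of q d c wstar] q1 c0 by (simp add: u_def[abs_def])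
    then have "(lpnorm q d u)\<^sup>2 \<le> c\<^sup>2"
      using ws c0 lpnorm_nonneg[of q d wstar] by (simp add: power_mult_distrib mult_left_le power_le_one)
    then show ?thesis unfolding psi_def Q_def using q1 by (simp add: divide_right_mono)
  qed
  have comb: "(\<Sum>t\<in>{1..T}. gval d n x y u (pp t)) - psi q d u / eta \<le> (\<Sum>t\<in>{1..T}. Aw d x y (ww t) i) + eta * ln n"
    using w_regret[of u] p_regret[OF i T1] by linarith
  have "psi q d u / eta \<le> c\<^sup>2 / (2 * Q) / eta" using psiu eta by (intro divide_right_mono) auto
  then have main: "(\<Sum>t\<in>{1..T}. Aw d x y (ww t) i) \<ge> T * c * gam - c\<^sup>2 / (2 * Q * eta) - eta * ln n"
    using comb lhs by (simp add: mult.assoc)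
  have ln0: "ln (real n) > 0" using n2 by simp
  have "T * gam \<ge> sqrt (2 * (p - 1) * ln (real n))"
    using Tb g by (simp add: divide_le_eq mult.commute)
  moreover have nn: "2 * (p - 1) * ln (real n) \<ge> 0" using p1 ln0 by (intro mult_nonneg_nonneg) auto
  ultimately have "(T * gam)\<^sup>2 \<ge> (sqrt (2 * (p - 1) * ln (real n)))\<^sup>2"
    by (intro power_mono) auto
  also have "(sqrt (2 * (p - 1) * ln (real n)))\<^sup>2 = 2 * (p - 1) * ln (real n)"
  proof -
    have "2 * (p - 1) * ln (real n) \<ge> 0" using p1 ln0 by simp
    then show ?thesis by (rule real_sqrt_pow2)
  qed
  finally have "Q * (T * gam)\<^sup>2 \<ge> Q * (2 * (p - 1) * ln (real n))"
    using Q by (simp add: mult_left_mono)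
  also have "Q * (2 * (p - 1) * ln (real n)) = 2 * ln (real n) * ((p - 1) * (q - 1))"
    by (simp add: Q_def algebra_simps)
  also have "\<dots> = 2 * ln (real n)" unfolding pq1 by simp
  finally have "Q * (T * gam)\<^sup>2 \<ge> 2 * ln (real n)" .
  from final_alg[OF Q eta this] have "T * c * gam - c\<^sup>2 / (2 * Q * eta) - eta * ln n \<ge> 0"
    by (simp add: c_def mult.assoc)
  then show ?thesis using main by linarith
qed

end

theorem theorem7:
  "\<exists>C>0. \<forall>(p::real) (q::real) (d::nat) (n::nat) (x::nat \<Rightarrow> nat \<Rightarrow> real) (y::nat \<Rightarrow> real)
      (wstar::nat \<Rightarrow> real) (\<gamma>::real) (ww::nat \<Rightarrow> nat \<Rightarrow> real) (pp::nat \<Rightarrow> nat \<Rightarrow> real) (T::nat).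
     2 \<le> p \<longrightarrow> 1 < q \<longrightarrow> q \<le> 2 \<longrightarrow> 1 / p + 1 / q = 1 \<longrightarrow>
     2 \<le> n \<longrightarrow>
     (\<forall>i<n. x i \<in> vecs d \<and> lpnorm p d (x i) \<le> 1 \<and> y i \<in> {-1, 1}) \<longrightarrow>
     wstar \<in> vecs d \<longrightarrow> lpnorm q d wstar \<le> 1 \<longrightarrow> 0 < \<gamma> \<longrightarrow>
     (\<forall>i<n. \<gamma> \<le> Aw d x y wstar i) \<longrightarrow>
     pp 0 = (\<lambda>i. if i < n then 1 / real n else 0) \<longrightarrow>
     (let \<eta>w = sqrt (1 / (2 * (q - 1) * ln (real n))); \<eta>p = 1 / \<eta>w in
       (\<forall>t\<in>{1..T}.
          ww t \<in> vecs d \<and>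
          (\<forall>w\<in>vecs d.
             \<eta>w * ((\<Sum>j\<in>{1..<t}. - gval d n x y w (pp j)) + (- gval d n x y w (pp (t - 1))))
               + 1 / (2 * (q - 1)) * (lpnorm q d w)\<^sup>2
             \<ge> \<eta>w * ((\<Sum>j\<in>{1..<t}. - gval d n x y (ww t) (pp j)) + (- gval d n x y (ww t) (pp (t - 1))))
               + 1 / (2 * (q - 1)) * (lpnorm q d (ww t))\<^sup>2) \<and>
          pp t \<in> simplex n \<and>
          (\<forall>r\<in>simplex n.
             \<eta>p * (\<Sum>s\<in>{1..t}. gval d n x y (ww s) r) + KL n r (pp 0)
             \<ge> \<eta>p * (\<Sum>s\<in>{1..t}. gval d n x y (ww s) (pp t)) + KL n (pp t) (pp 0)))) \<longrightarrow>
     real T \<ge> C * sqrt (2 * (p - 1) * ln (real n)) / \<gamma> \<longrightarrow>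
     (\<forall>i<n. 0 \<le> Aw d x y (\<lambda>k. (1 / real T) * (\<Sum>s\<in>{1..T}. ww s k)) i)"
proof (rule exI[of _ 1], intro conjI allI impI)
  show "(0::real) < 1" by simp
next
  fix p q :: real and d n :: nat and x :: "nat \<Rightarrow> nat \<Rightarrow> real" and y :: "nat \<Rightarrow> real"
    and wstar :: "nat \<Rightarrow> real" and gam :: real and ww pp :: "nat \<Rightarrow> nat \<Rightarrow> real" and T :: nat and i :: nat
  assume p2: "2 \<le> p" and q1: "1 < q" and q2: "q \<le> 2" and pq: "1 / p + 1 / q = 1"
    and n2: "2 \<le> n"
    and xn: "\<forall>i<n. x i \<in> vecs d \<and> lpnorm p d (x i) \<le> 1 \<and> y i \<in> {-1, 1}"
    and wv: "wstar \<in> vecs d" and ws: "lpnorm q d wstar \<le> 1" and g: "0 < gam"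
    and wm: "\<forall>i<n. gam \<le> Aw d x y wstar i"
    and pp0: "pp 0 = (\<lambda>i. if i < n then 1 / real n else 0)"
    and H: "let \<eta>w = sqrt (1 / (2 * (q - 1) * ln (real n))); \<eta>p = 1 / \<eta>w in
       (\<forall>t\<in>{1..T}.
          ww t \<in> vecs d \<and>
          (\<forall>w\<in>vecs d.
             \<eta>w * ((\<Sum>j\<in>{1..<t}. - gval d n x y w (pp j)) + (- gval d n x y w (pp (t - 1))))
               + 1 / (2 * (q - 1)) * (lpnorm q d w)\<^sup>2
             \<ge> \<eta>w * ((\<Sum>j\<in>{1..<t}. - gval d n x y (ww t) (pp j)) + (- gval d n x y (ww t) (pp (t - 1))))
               + 1 / (2 * (q - 1)) * (lpnorm q d (ww t))\<^sup>2) \<and>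
          pp t \<in> simplex n \<and>
          (\<forall>r\<in>simplex n.
             \<eta>p * (\<Sum>s\<in>{1..t}. gval d n x y (ww s) r) + KL n r (pp 0)
             \<ge> \<eta>p * (\<Sum>s\<in>{1..t}. gval d n x y (ww s) (pp t)) + KL n (pp t) (pp 0)))"
    and Tb: "real T \<ge> 1 * sqrt (2 * (p - 1) * ln (real n)) / gam"
    and i: "i < n"
  define eta where "eta = sqrt (1 / (2 * (q - 1) * ln (real n)))"
  have eta: "eta > 0" using q1 n2 by (simp add: eta_def)
  have hyp: "\<forall>t\<in>{1..T}.
          ww t \<in> vecs d \<and>
          (\<forall>w\<in>vecs d.
             eta * ((\<Sum>j\<in>{1..<t}. - gval d n x y w (pp j)) + (- gval d n x y w (pp (t - 1))))
               + 1 / (2 * (q - 1)) * (lpnorm q d w)\<^sup>2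
             \<ge> eta * ((\<Sum>j\<in>{1..<t}. - gval d n x y (ww t) (pp j)) + (- gval d n x y (ww t) (pp (t - 1))))
               + 1 / (2 * (q - 1)) * (lpnorm q d (ww t))\<^sup>2) \<and>
          pp t \<in> simplex n \<and>
          (\<forall>r\<in>simplex n.
             1 / eta * (\<Sum>s\<in>{1..t}. gval d n x y (ww s) r) + KL n r (pp 0)
             \<ge> 1 / eta * (\<Sum>s\<in>{1..t}. gval d n x y (ww s) (pp t)) + KL n (pp t) (pp 0))"
    using H unfolding Let_def eta_def .
  show "0 \<le> Aw d x y (\<lambda>k. 1 / real T * (\<Sum>s\<in>{1..T}. ww s k)) i"
  proof (cases "T = 0")
    case True
    then show ?thesis by (simp add: Aw_def)
  next
    case False
    then have T1: "1 \<le> T" by simp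
    have Tb': "real T \<ge> sqrt (2 * (p - 1) * ln (real n)) / gam" using Tb by simp
    have s: "(\<Sum>t\<in>{1..T}. Aw d x y (ww t) i) \<ge> 0"
      by (rule margin_sum[OF p2 pq eta n2 xn pp0 hyp i T1 g ws wm Tb'])
    have "Aw d x y (\<lambda>k. 1 / real T * (\<Sum>s\<in>{1..T}. ww s k)) i = 1 / real T * (\<Sum>t\<in>{1..T}. Aw d x y (ww t) i)"
    proof -
      have "Aw d x y (\<lambda>k. 1 / real T * (\<Sum>s\<in>{1..T}. ww s k)) i
          = 1 / real T * (y i * (\<Sum>k<d. \<Sum>s\<in>{1..T}. x i k * ww s k))"
        by (simp add: Aw_def sum_distrib_left algebra_simps)
      also have "(\<Sum>k<d. \<Sum>s\<in>{1..T}. x i k * ww s k) = (\<Sum>s\<in>{1..T}. \<Sum>k<d. x i k * ww s k)"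
        by (rule sum.swap)
      finally show ?thesis by (simp add: Aw_def sum_distrib_left)
    qed
    then show ?thesis using s by simp
  qed
qed

end
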